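(* For every $A\in\mathcal A$, the hypergraph $\mathcal N(A,V(A)\setminus X(A))$ is an atomic Maker-Breaker critical hypergraph.
   Context: For a predominated graph $(G,D)$ ($D\subseteq V(G)$), $\mathcal N(G,D)$ is the hypergraph with vertex set $V(G)$ and edge set $\{N_G[v]: v\in V(G)\setminus D\}$. A hypergraph $\mathcal H=(V,E)$ is Maker-Breaker critical if Maker wins the Maker-Breaker game on $\mathcal H$ (players alternately claim unclaimed vertices, Maker first; Maker wins if he claims all vertices of some edge) but Breaker wins on $(V,E\setminus\{e\})$ for every $e\in E$; it is atomic if it additionally has no isolated vertices. For a tree $T$, $S(T)$ is obtained by subdividing each edge of $T$ exactly once; $\mathcal S=\{S(T):T\text{ a tree}\}$ and $X(S(T))=V(T)$ (with $S(P_1)=P_1$, $X(P_1)=V(P_1)$). For $k\ge 2$, the $k$-odd replacement of an edge $xy$ removes $xy$ and adds $k$ internally vertex-disjoint $x,y$-paths of arbitrary odd lengths. $\mathcal A$ is the smallest family of graphs such that $\mathcal S\subseteq\mathcal A$ and, if $A\in\mathcal A$ and $A'$ is obtained from $A$ by a $k$-odd replacement ($k\ge2$) of an edge, then $A'\in\mathcal A$ with $X(A')$ the bipartition class of the bipartite graph $A'$ containing $X(A)$. *)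

theory Defs
  imports Main
begin

definition wf_graph :: "'a set \<Rightarrow> 'a set set \<Rightarrow> bool" where
  "wf_graph V E \<longleftrightarrow> finite V \<and>
     (\<forall>e\<in>E. \<exists>u v. u \<noteq> v \<and> e = {u, v} \<and> u \<in> V \<and> v \<in> V)"

definition adj_rel :: "'a set set \<Rightarrow> ('a \<times> 'a) set" where
  "adj_rel E = {(u, v). {u, v} \<in> E}"

definition connected_graph :: "'a set \<Rightarrow> 'a set set \<Rightarrow> bool" where
  "connected_graph V E \<longleftrightarrow> (\<forall>u\<in>V. \<forall>v\<in>V. (u, v) \<in> (adj_rel E)\<^sup>*)"

definition is_cycle :: "'a set set \<Rightarrow> 'a list \<Rightarrow> bool" where
  "is_cycle E cs \<longleftrightarrow> length cs \<ge> 3 \<and> distinct cs \<and>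
     (\<forall>i < length cs. {cs ! i, cs ! ((i + 1) mod length cs)} \<in> E)"

definition is_tree :: "'a set \<Rightarrow> 'a set set \<Rightarrow> bool" where
  "is_tree V E \<longleftrightarrow> wf_graph V E \<and> V \<noteq> {} \<and> connected_graph V E \<and>
     \<not> (\<exists>cs. is_cycle E cs)"

definition path_edges :: "'a list \<Rightarrow> 'a set set" where
  "path_edges p = {{p ! i, p ! (i + 1)} | i. i + 1 < length p}"

definition internal :: "'a list \<Rightarrow> 'a set" where
  "internal p = set (butlast (tl p))"

text \<open>famA V E X: the graph (V,E) belongs to \<open>\<A>\<close> and X = X(A).
  Base case: S(T) for a tree T = (VT, ET); the subdivision vertices are a set M
  disjoint from VT in bijection f with ET, and X(S(T)) = VT
  (for T = P_1 this gives S(P_1) = P_1 with X = V(P_1)).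
  Step: k-odd replacement (k >= 2) of an edge {x,y} by k distinct internally
  vertex-disjoint x,y-paths (vertex lists) of odd length with new internal vertices;
  X' is the bipartition class of the new graph containing X.\<close>

inductive famA :: "'a set \<Rightarrow> 'a set set \<Rightarrow> 'a set \<Rightarrow> bool" where
  subdiv:
    "\<lbrakk> is_tree VT ET; M \<inter> VT = {}; bij_betw f ET M \<rbrakk> \<Longrightarrow>
     famA (VT \<union> M) {{x, f e} | x e. e \<in> ET \<and> x \<in> e} VT"
| odd_replace:
    "\<lbrakk> famA V E X; {x, y} \<in> E; length Ps \<ge> 2; distinct Ps;
       \<forall>p\<in>set Ps. length p \<ge> 2 \<and> even (length p) \<and> distinct p \<and>
                   hd p = x \<and> last p = y \<and> internal p \<inter> V = {};
       \<forall>i < length Ps. \<forall>j < length Ps. i \<noteq> j \<longrightarrow> internal (Ps ! i) \<inter> internal (Ps ! j) = {};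
       V' = V \<union> (\<Union>p\<in>set Ps. set p);
       E' = (E - {{x, y}}) \<union> (\<Union>p\<in>set Ps. path_edges p);
       X \<subseteq> X'; X' \<subseteq> V'; \<forall>e\<in>E'. card (e \<inter> X') = 1 \<rbrakk>
     \<Longrightarrow> famA V' E' X'"

type_synonym 'a hypergraph = "'a set \<times> 'a set set"

definition cnbhd :: "'a set set \<Rightarrow> 'a \<Rightarrow> 'a set" where
  "cnbhd E v = insert v {u. {u, v} \<in> E}"

definition nbhd_hypergraph :: "'a set \<Rightarrow> 'a set set \<Rightarrow> 'a set \<Rightarrow> 'a hypergraph" where
  "nbhd_hypergraph V E D = (V, {cnbhd E v | v. v \<in> V - D})"

text \<open>mwin V H M B: in the position where Maker has claimed M, Breaker has claimed B,
  and it is Maker's turn, Maker has a winning strategy.\<close>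
inductive mwin :: "'a set \<Rightarrow> 'a set set \<Rightarrow> 'a set \<Rightarrow> 'a set \<Rightarrow> bool" for V H where
  win_now: "\<lbrakk> e \<in> H; e \<subseteq> M \<rbrakk> \<Longrightarrow> mwin V H M B"
| play: "\<lbrakk> v \<in> V - (M \<union> B);
          (\<exists>e\<in>H. e \<subseteq> insert v M) \<or>
          (V - (M \<union> B \<union> {v}) \<noteq> {} \<and>
           (\<forall>w \<in> V - (M \<union> B \<union> {v}). mwin V H (insert v M) (insert w B))) \<rbrakk>
        \<Longrightarrow> mwin V H M B"

definition maker_wins :: "'a hypergraph \<Rightarrow> bool" where
  "maker_wins \<H> \<longleftrightarrow> mwin (fst \<H>) (snd \<H>) {} {}"

definition mb_critical :: "'a hypergraph \<Rightarrow> bool" where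
  "mb_critical \<H> \<longleftrightarrow> maker_wins \<H> \<and>
     (\<forall>e \<in> snd \<H>. \<not> maker_wins (fst \<H>, snd \<H> - {e}))"

definition mb_atomic :: "'a hypergraph \<Rightarrow> bool" where
  "mb_atomic \<H> \<longleftrightarrow> mb_critical \<H> \<and> (\<forall>v \<in> fst \<H>. \<exists>e \<in> snd \<H>. v \<in> e)"

end

theory Submission
  imports Defs
begin

lemma breaker_inner:
  assumes pr: "\<forall>P\<in>Qs. \<exists>u w. P = {u,w} \<and> u \<noteq> w \<and> u \<in> V \<and> w \<in> V"
    and dj: "\<forall>P\<in>Qs. \<forall>Q\<in>Qs. P \<noteq> Q \<longrightarrow> P \<inter> Q = {}"
    and cov: "\<forall>e\<in>H. \<exists>P\<in>Qs. P \<subseteq> e"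
  shows "mwin V H M B \<Longrightarrow> M \<inter> B = {} \<Longrightarrow> (\<forall>P\<in>Qs. P \<inter> M \<noteq> {} \<longrightarrow> P \<inter> B \<noteq> {}) \<Longrightarrow> False"
proof (induction rule: mwin.induct)
  case (win_now e M B)
  then obtain P where P: "P \<in> Qs" "P \<subseteq> e" using cov by blast
  then obtain u w where uw: "P = {u,w}" using pr by blast
  then have "P \<inter> M \<noteq> {}" using P win_now by blast
  then have "P \<inter> B \<noteq> {}" using win_now P by blast
  then show ?case using P win_now by blast
next
  case (play v M B)
  have vfree: "v \<in> V" "v \<notin> M" "v \<notin> B" using play.hyps(1) by auto
  show ?case
  proof (cases "\<exists>e\<in>H. e \<subseteq> insert v M")
    case True
    then obtain e where e: "e \<in> H" "e \<subseteq> insert v M" by blast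
    then obtain P where P: "P \<in> Qs" "P \<subseteq> e" using cov by blast
    then obtain u w where uw: "P = {u,w}" "u \<noteq> w" using pr by blast
    have PM: "P \<subseteq> insert v M" using P e by blast
    show False
    proof (cases "v \<in> P")
      case False
      then have "P \<subseteq> M" using PM by blast
      then have "P \<inter> M \<noteq> {}" using uw by blast
      then have "P \<inter> B \<noteq> {}" using play.prems(2) P by blast
      then show False using \<open>P \<subseteq> M\<close> play.prems(1) by blast
    next
      case True
      obtain t where t: "P = {v, t}" "t \<noteq> v" using uw True by blast
      then have tM: "t \<in> M" using PM by blast
      then have "P \<inter> M \<noteq> {}" using t by blast
      then have "P \<inter> B \<noteq> {}" using play.prems(2) P by blast
      then show False using t \<open>t \<in> M\<close> vfree play.prems by blast
    qed
  next
    case False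
    then have rest: "V - (M \<union> B \<union> {v}) \<noteq> {}"
      and IH: "\<forall>w\<in>V - (M \<union> B \<union> {v}). mwin V H (insert v M) (insert w B) \<and>
         (insert v M \<inter> insert w B = {} \<longrightarrow>
          (\<forall>P\<in>Qs. P \<inter> insert v M \<noteq> {} \<longrightarrow> P \<inter> insert w B \<noteq> {}) \<longrightarrow> False)"
      using play.IH by auto
    define w where "w = (if \<exists>P\<in>Qs. \<exists>t. P = {v,t} \<and> t \<in> V - (M \<union> B \<union> {v})
       then (SOME t. \<exists>P\<in>Qs. P = {v,t} \<and> t \<in> V - (M \<union> B \<union> {v}))
       else (SOME t. t \<in> V - (M \<union> B \<union> {v})))"
    have wfree: "w \<in> V - (M \<union> B \<union> {v})"
    proof (cases "\<exists>P\<in>Qs. \<exists>t. P = {v,t} \<and> t \<in> V - (M \<union> B \<union> {v})")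
      case True
      then have "\<exists>t. \<exists>P\<in>Qs. P = {v,t} \<and> t \<in> V - (M \<union> B \<union> {v})" by blast
      from someI_ex[OF this] show ?thesis using True w_def by auto
    next
      case False
      then have "w = (SOME t. t \<in> V - (M \<union> B \<union> {v}))" using w_def by metis
      moreover have "\<exists>t. t \<in> V - (M \<union> B \<union> {v})" using rest by blast
      ultimately show ?thesis using someI_ex by metis
    qed
    have wpart: "\<forall>P\<in>Qs. \<forall>t. P = {v,t} \<and> t \<in> V - (M \<union> B \<union> {v}) \<longrightarrow> t = w"
    proof (intro ballI allI impI)
      fix P t assume P: "P \<in> Qs" and Pt: "P = {v,t} \<and> t \<in> V - (M \<union> B \<union> {v})"
      have ex: "\<exists>t. \<exists>P\<in>Qs. P = {v,t} \<and> t \<in> V - (M \<union> B \<union> {v})" using P Pt by blast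
      then have ww: "w = (SOME t. \<exists>P\<in>Qs. P = {v,t} \<and> t \<in> V - (M \<union> B \<union> {v}))" using w_def by auto
      from someI_ex[OF ex] obtain P' where P': "P' \<in> Qs" "P' = {v,w} \<and> w \<in> V - (M \<union> B \<union> {v})"
        using ww by auto
      have vin: "v \<in> P \<inter> P'" using Pt P' by blast
      have "P = P'"
      proof (rule ccontr)
        assume "P \<noteq> P'"
        then have "P \<inter> P' = {}" using dj P P'(1) by blast
        then show False using vin by blast
      qed
      then show "t = w" using Pt P' by auto
    qed
    have inv: "\<forall>P\<in>Qs. P \<inter> insert v M \<noteq> {} \<longrightarrow> P \<inter> insert w B \<noteq> {}"
    proof (intro ballI impI)
      fix P assume P: "P \<in> Qs" and ne: "P \<inter> insert v M \<noteq> {}"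
      show "P \<inter> insert w B \<noteq> {}"
      proof (cases "v \<in> P")
        case False
        then have "P \<inter> M \<noteq> {}" using ne by blast
        then have "P \<inter> B \<noteq> {}" using play.prems(2) P by blast
        then show ?thesis by blast
      next
        case True
        obtain u t where ut: "P = {u,t}" "u \<noteq> t" "u \<in> V" "t \<in> V" using pr P by blast
        obtain s where s: "P = {v,s}" "s \<noteq> v" "s \<in> V" using ut True by blast
        show ?thesis
        proof (cases "s \<in> M")
          case True
          then have "P \<inter> M \<noteq> {}" using s by blast
          then have "P \<inter> B \<noteq> {}" using play.prems(2) P by blast
          then show ?thesis by blast
        next
          case sM: False
          show ?thesis
          proof (cases "s \<in> B")
            case True then show ?thesis using s by blast
          next
            case False
            then have "s = w" using wpart P s sM by blast
            then show ?thesis using s by blast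
          qed
        qed
      qed
    qed
    have "insert v M \<inter> insert w B = {}" using wfree vfree play.prems by blast
    then show False using IH wfree inv by blast
  qed
qed

lemma breaker_pairing:
  assumes "\<forall>P\<in>Qs. \<exists>u w. P = {u,w} \<and> u \<noteq> w \<and> u \<in> V \<and> w \<in> V"
    and "\<forall>P\<in>Qs. \<forall>Q\<in>Qs. P \<noteq> Q \<longrightarrow> P \<inter> Q = {}"
    and "\<forall>e\<in>H. \<exists>P\<in>Qs. P \<subseteq> e"
  shows "\<not> mwin V H {} {}"
proof
  assume "mwin V H {} {}"
  then show False by (rule breaker_inner[OF assms]) auto
qed

definition badp :: "'a set \<Rightarrow> 'a set \<Rightarrow> 'a set \<Rightarrow> bool" where
  "badp M B P \<longleftrightarrow> P \<inter> M = {} \<and> P \<inter> B \<noteq> {}"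

lemma pr_sub: "\<forall>P\<in>Ps. \<exists>u w. P = {u,w} \<and> u \<noteq> w \<and> u \<in> V \<and> w \<in> V \<Longrightarrow> P \<in> Ps \<Longrightarrow> P \<subseteq> V"
  by (drule bspec, assumption, auto)

lemma pr_two: "\<forall>P\<in>Ps. \<exists>u w. P = {u,w} \<and> u \<noteq> w \<and> u \<in> V \<and> w \<in> V \<Longrightarrow> P \<in> Ps \<Longrightarrow> x \<in> P \<Longrightarrow> \<exists>y. P = {x,y} \<and> y \<noteq> x"
  by (drule bspec, assumption, auto)

lemma maker_inner:
  assumes fin: "finite V"
    and pr: "\<forall>P\<in>Ps. \<exists>u w. P = {u,w} \<and> u \<noteq> w \<and> u \<in> V \<and> w \<in> V"
    and dj: "\<forall>P\<in>Ps. \<forall>Q\<in>Ps. P \<noteq> Q \<longrightarrow> P \<inter> Q = {}"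
    and valid: "\<forall>S. v0 \<in> S \<longrightarrow> (\<forall>P\<in>Ps. P \<inter> S \<noteq> {}) \<longrightarrow> (\<exists>e\<in>H. e \<subseteq> S)"
  shows "card (V - (M \<union> B)) = n \<Longrightarrow> M \<subseteq> V \<Longrightarrow> B \<subseteq> V \<Longrightarrow> M \<inter> B = {} \<Longrightarrow> v0 \<in> M
    \<Longrightarrow> (\<forall>P\<in>Ps. \<not> P \<subseteq> B) \<Longrightarrow> (\<forall>P\<in>Ps. \<forall>Q\<in>Ps. badp M B P \<longrightarrow> badp M B Q \<longrightarrow> P = Q)
    \<Longrightarrow> mwin V H M B"
proof (induction n arbitrary: M B rule: less_induct)
  case (less n M B)
  show ?case
  proof (cases "\<forall>P\<in>Ps. P \<inter> M \<noteq> {}")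
    case True
    then obtain e where "e \<in> H" "e \<subseteq> M" using valid less.prems(5) by blast
    then show ?thesis by (rule win_now)
  next
    case False
    then obtain P0 where P0: "P0 \<in> Ps" "P0 \<inter> M = {}" by blast
    define P1 where "P1 = (if \<exists>P\<in>Ps. badp M B P then (SOME P. P \<in> Ps \<and> badp M B P) else P0)"
    have P1: "P1 \<in> Ps" "P1 \<inter> M = {}" "(\<exists>P\<in>Ps. badp M B P) \<longrightarrow> badp M B P1"
    proof -
      have "P1 \<in> Ps \<and> P1 \<inter> M = {} \<and> ((\<exists>P\<in>Ps. badp M B P) \<longrightarrow> badp M B P1)"
      proof (cases "\<exists>P\<in>Ps. badp M B P")
        case True
        then have ex: "\<exists>P. P \<in> Ps \<and> badp M B P" by blast
        have "P1 = (SOME P. P \<in> Ps \<and> badp M B P)" using True P1_def by simp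
        with someI_ex[OF ex] have "P1 \<in> Ps \<and> badp M B P1" by simp
        then show ?thesis unfolding badp_def by blast
      next
        case False
        then show ?thesis using P0 P1_def by simp
      qed
      then show "P1 \<in> Ps" "P1 \<inter> M = {}" "(\<exists>P\<in>Ps. badp M B P) \<longrightarrow> badp M B P1" by auto
    qed
    have "\<not> P1 \<subseteq> B" using less.prems(6) P1(1) by blast
    then obtain v where v: "v \<in> P1" "v \<notin> B" by blast
    have vM: "v \<notin> M" using v P1(2) by blast
    have vV: "v \<in> V" using pr_sub[OF pr P1(1)] v(1) by blast
    have vfree: "v \<in> V - (M \<union> B)" using vV v vM by blast
    show ?thesis
    proof (rule play[OF vfree])
      show "(\<exists>e\<in>H. e \<subseteq> insert v M) \<or>
        (V - (M \<union> B \<union> {v}) \<noteq> {} \<and> (\<forall>w\<in>V - (M \<union> B \<union> {v}). mwin V H (insert v M) (insert w B)))"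
      proof (cases "\<exists>e\<in>H. e \<subseteq> insert v M")
        case True then show ?thesis by blast
      next
        case nowin: False
        have meetall_ne: "V - (M \<union> B \<union> {v}) \<noteq> {}"
        proof
          assume emp: "V - (M \<union> B \<union> {v}) = {}"
          have "\<forall>P\<in>Ps. P \<inter> insert v M \<noteq> {}"
          proof
            fix P assume P: "P \<in> Ps"
            have PV: "P \<subseteq> V" using pr_sub[OF pr P] .
            have nb: "\<not> P \<subseteq> B" using less.prems(6) P by blast
            then show "P \<inter> insert v M \<noteq> {}" using emp PV by blast
          qed
          moreover have "v0 \<in> insert v M" using less.prems(5) by blast
          ultimately show False using valid nowin by blast
        qed
        have step: "\<forall>w\<in>V - (M \<union> B \<union> {v}). mwin V H (insert v M) (insert w B)"
        proof
          fix w assume w: "w \<in> V - (M \<union> B \<union> {v})"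
          have sub: "V - (insert v M \<union> insert w B) \<subset> V - (M \<union> B)" using w vfree by blast
          have lt: "card (V - (insert v M \<union> insert w B)) < n"
            using psubset_card_mono[OF _ sub] fin less.prems(1) by blast
          have nsub: "\<forall>P\<in>Ps. \<not> P \<subseteq> insert w B"
          proof
            fix P assume P: "P \<in> Ps"
            show "\<not> P \<subseteq> insert w B"
            proof
              assume Psub: "P \<subseteq> insert w B"
              have nb: "\<not> P \<subseteq> B" using less.prems(6) P by blast
              then have wP: "w \<in> P" using Psub by blast
              obtain u where u: "P = {w,u}" "u \<noteq> w" using pr_two[OF pr P wP] by blast
              have uB: "u \<in> B" using Psub u by blast
              have "badp M B P" unfolding badp_def using u uB w less.prems(4) by blast
              then have "badp M B P1" using P1(3) P by blast
              then have "P = P1" using less.prems(7) P P1(1) \<open>badp M B P\<close> by blast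
              then have "v \<in> P" using v by simp
              then show False using u uB w v by blast
            qed
          qed
          have uniq: "\<forall>P\<in>Ps. \<forall>Q\<in>Ps. badp (insert v M) (insert w B) P \<longrightarrow> badp (insert v M) (insert w B) Q \<longrightarrow> P = Q"
          proof (intro ballI impI)
            fix P Q assume P: "P \<in> Ps" and Q: "Q \<in> Ps"
              and bP: "badp (insert v M) (insert w B) P" and bQ: "badp (insert v M) (insert w B) Q"
            have key: "\<And>R. R \<in> Ps \<Longrightarrow> badp (insert v M) (insert w B) R \<Longrightarrow> w \<in> R"
            proof (rule ccontr)
              fix R assume R: "R \<in> Ps" and bR: "badp (insert v M) (insert w B) R" and nw: "w \<notin> R"
              have "badp M B R" using bR nw unfolding badp_def by blast
              then have "badp M B P1" using P1(3) R by blast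
              then have "R = P1" using less.prems(7) R P1(1) \<open>badp M B R\<close> by blast
              then have "v \<in> R" using v by simp
              then show False using bR unfolding badp_def by blast
            qed
            have "w \<in> P" "w \<in> Q" using key P Q bP bQ by auto
            then show "P = Q" using dj P Q by blast
          qed
          show "mwin V H (insert v M) (insert w B)"
            using less.IH[OF lt refl] w vfree less.prems nsub uniq by blast
        qed
        show ?thesis using meetall_ne step by blast
      qed
    qed
  qed
qed

lemma maker_cert:
  assumes fin: "finite V" and v0: "v0 \<in> V"
    and pr: "\<forall>P\<in>Ps. \<exists>u w. P = {u,w} \<and> u \<noteq> w \<and> u \<in> V \<and> w \<in> V"
    and dj: "\<forall>P\<in>Ps. \<forall>Q\<in>Ps. P \<noteq> Q \<longrightarrow> P \<inter> Q = {}"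
    and valid: "\<forall>S. v0 \<in> S \<longrightarrow> (\<forall>P\<in>Ps. P \<inter> S \<noteq> {}) \<longrightarrow> (\<exists>e\<in>H. e \<subseteq> S)"
  shows "mwin V H {} {}"
proof (rule play[of v0])
  show "v0 \<in> V - ({} \<union> {})" using v0 by simp
  show "(\<exists>e\<in>H. e \<subseteq> insert v0 {}) \<or>
    (V - ({} \<union> {} \<union> {v0}) \<noteq> {} \<and> (\<forall>w\<in>V - ({} \<union> {} \<union> {v0}). mwin V H (insert v0 {}) (insert w {})))"
  proof (cases "\<exists>e\<in>H. e \<subseteq> insert v0 {}")
    case True then show ?thesis by blast
  next
    case nowin: False
    have ne: "V - ({} \<union> {} \<union> {v0}) \<noteq> {}"
    proof
      assume emp: "V - ({} \<union> {} \<union> {v0}) = {}"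
      have "\<forall>P\<in>Ps. P \<inter> {v0} \<noteq> {}"
      proof
        fix P assume P: "P \<in> Ps"
        have PV: "P \<subseteq> V" using pr_sub[OF pr P] .
        obtain u t where uw: "P = {u,t}" "u \<noteq> t" using pr P by blast
        then show "P \<inter> {v0} \<noteq> {}" using emp PV by blast
      qed
      then show False using valid nowin by auto
    qed
    have "\<forall>w\<in>V - ({} \<union> {} \<union> {v0}). mwin V H (insert v0 {}) (insert w {})"
    proof
      fix w assume w: "w \<in> V - ({} \<union> {} \<union> {v0})"
      have nsub: "\<forall>P\<in>Ps. \<not> P \<subseteq> {w}"
      proof
        fix P assume P: "P \<in> Ps"
        obtain u t where uw: "P = {u,t}" "u \<noteq> t" using pr P by blast
        then show "\<not> P \<subseteq> {w}" by blast
      qed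
      have uniq: "\<forall>P\<in>Ps. \<forall>Q\<in>Ps. badp {v0} {w} P \<longrightarrow> badp {v0} {w} Q \<longrightarrow> P = Q"
      proof (intro ballI impI)
        fix P Q assume P: "P \<in> Ps" and Q: "Q \<in> Ps" and "badp {v0} {w} P" "badp {v0} {w} Q"
        then have "w \<in> P" "w \<in> Q" unfolding badp_def by auto
        then show "P = Q" using dj P Q by blast
      qed
      show "mwin V H (insert v0 {}) (insert w {})"
        using maker_inner[OF fin pr dj valid refl] w v0 nsub uniq by auto
    qed
    then show ?thesis using ne by blast
  qed
qed

inductive famB :: "'a set \<Rightarrow> 'a set set \<Rightarrow> 'a set \<Rightarrow> bool" where
  baseB: "famB {v} {} {v}"
| leafB: "famB V E X \<Longrightarrow> x \<in> X \<Longrightarrow> l \<notin> V \<Longrightarrow> y \<notin> V \<Longrightarrow> l \<noteq> y \<Longrightarrow>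
     famB (insert l (insert y V)) (insert {x,y} (insert {y,l} E)) (insert l X)"
| unitB: "famB V E X \<Longrightarrow> {p,q} \<in> E \<Longrightarrow> p \<in> X \<Longrightarrow> a \<notin> V \<Longrightarrow> b \<notin> V \<Longrightarrow> a \<noteq> b \<Longrightarrow>
     famB (insert a (insert b V)) (insert {p,a} (insert {a,b} (insert {b,q} (if d then E - {{p,q}} else E)))) (insert b X)"

definition edgeok :: "'a set \<Rightarrow> 'a set set \<Rightarrow> 'a set \<Rightarrow> bool" where
  "edgeok V E X \<longleftrightarrow> (\<forall>e\<in>E. \<exists>x y. e = {x,y} \<and> x \<in> X \<and> y \<in> V - X)"

lemma edgeok_D: "edgeok V E X \<Longrightarrow> {u,w} \<in> E \<Longrightarrow> u \<in> X \<Longrightarrow> w \<in> V - X"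
  unfolding edgeok_def by (drule bspec, assumption) (auto simp: doubleton_eq_iff)

lemma edgeok_D2: "edgeok V E X \<Longrightarrow> {u,w} \<in> E \<Longrightarrow> u \<in> V - X \<Longrightarrow> w \<in> X"
  unfolding edgeok_def by (drule bspec, assumption) (auto simp: doubleton_eq_iff)

lemma edgeok_sub: "edgeok V E X \<Longrightarrow> X \<subseteq> V \<Longrightarrow> e \<in> E \<Longrightarrow> e \<subseteq> V \<and> X \<inter> e \<noteq> {}"
  unfolding edgeok_def by (drule bspec, assumption) auto

lemma edgeok_cases: "edgeok V E X \<Longrightarrow> {u,w} \<in> E \<Longrightarrow> X \<subseteq> V \<Longrightarrow> (u \<in> X \<and> w \<in> V - X) \<or> (w \<in> X \<and> u \<in> V - X)"
  unfolding edgeok_def by (drule bspec, assumption) (auto simp: doubleton_eq_iff)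

lemma famB_inv: "famB V E X \<Longrightarrow> finite V \<and> X \<subseteq> V \<and> edgeok V E X \<and> (\<forall>v\<in>V - X. \<exists>x\<in>X. {x,v} \<in> E)"
proof (induction rule: famB.induct)
  case (baseB v)
  then show ?case unfolding edgeok_def by auto
next
  case (leafB V E X x l y)
  have XV: "X \<subseteq> V" and eok: "edgeok V E X" and nbr: "\<forall>v\<in>V - X. \<exists>x\<in>X. {x,v} \<in> E"
    using leafB.IH by auto
  have yX: "y \<notin> X" "l \<notin> X" "x \<in> V" using XV leafB.hyps by auto
  have ok: "edgeok (insert l (insert y V)) (insert {x, y} (insert {y, l} E)) (insert l X)"
    unfolding edgeok_def
  proof
    fix e assume e: "e \<in> insert {x, y} (insert {y, l} E)"
    show "\<exists>xa ya. e = {xa, ya} \<and> xa \<in> insert l X \<and> ya \<in> insert l (insert y V) - insert l X"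
    proof (cases "e = {x,y}")
      case True then show ?thesis using leafB.hyps yX by (intro exI[of _ x] exI[of _ y]) auto
    next
      case F1: False
      show ?thesis
      proof (cases "e = {y,l}")
        case True then show ?thesis using leafB.hyps yX by (intro exI[of _ l] exI[of _ y]) auto
      next
        case False
        then have "e \<in> E" using e F1 by blast
        then obtain u w where "e = {u,w}" "u \<in> X" "w \<in> V - X" using eok unfolding edgeok_def by blast
        then show ?thesis using yX leafB.hyps by (intro exI[of _ u] exI[of _ w]) auto
      qed
    qed
  qed
  have nb: "\<forall>v\<in>insert l (insert y V) - insert l X. \<exists>xa\<in>insert l X. {xa, v} \<in> insert {x, y} (insert {y, l} E)"
  proof
    fix v assume v: "v \<in> insert l (insert y V) - insert l X"
    show "\<exists>xa\<in>insert l X. {xa, v} \<in> insert {x, y} (insert {y, l} E)"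
    proof (cases "v = y")
      case True then show ?thesis using leafB.hyps by blast
    next
      case False
      then have "v \<in> V - X" using v by blast
      then obtain u where "u \<in> X" "{u,v} \<in> E" using nbr by blast
      then show ?thesis by blast
    qed
  qed
  show ?case using ok nb leafB.IH yX by auto
next
  case (unitB V E X p q a b d)
  have XV: "X \<subseteq> V" and eok: "edgeok V E X" and nbr: "\<forall>v\<in>V - X. \<exists>x\<in>X. {x,v} \<in> E"
    using unitB.IH by auto
  have abX: "a \<notin> X" "b \<notin> X" "p \<in> V" using XV unitB.hyps by auto
  have qY: "q \<in> V - X" using edgeok_D[of V E X p q] unitB by blast
  let ?E0 = "if d then E - {{p,q}} else E"
  have E0: "?E0 \<subseteq> E" by auto
  have ok: "edgeok (insert a (insert b V)) (insert {p,a} (insert {a,b} (insert {b,q} ?E0))) (insert b X)"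
    unfolding edgeok_def
  proof
    fix e assume e: "e \<in> insert {p,a} (insert {a,b} (insert {b,q} ?E0))"
    show "\<exists>x y. e = {x, y} \<and> x \<in> insert b X \<and> y \<in> insert a (insert b V) - insert b X"
    proof (cases "e = {p,a}")
      case True then show ?thesis using unitB.hyps abX by (intro exI[of _ p] exI[of _ a]) auto
    next
      case F1: False
      show ?thesis
      proof (cases "e = {a,b}")
        case True then show ?thesis using unitB.hyps abX by (intro exI[of _ b] exI[of _ a]) auto
      next
        case F2: False
        show ?thesis
        proof (cases "e = {b,q}")
          case True then show ?thesis using unitB.hyps qY abX by (intro exI[of _ b] exI[of _ q]) auto
        next
          case False
          then have "e \<in> E" using e F1 F2 E0 by blast
          then obtain u w where "e = {u,w}" "u \<in> X" "w \<in> V - X" using eok unfolding edgeok_def by blast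
          then show ?thesis using abX unitB.hyps by (intro exI[of _ u] exI[of _ w]) auto
        qed
      qed
    qed
  qed
  have nb: "\<forall>v\<in>insert a (insert b V) - insert b X. \<exists>x\<in>insert b X. {x, v} \<in> insert {p,a} (insert {a,b} (insert {b,q} ?E0))"
  proof
    fix v assume v: "v \<in> insert a (insert b V) - insert b X"
    show "\<exists>x\<in>insert b X. {x, v} \<in> insert {p,a} (insert {a,b} (insert {b,q} ?E0))"
    proof (cases "v = a")
      case True then show ?thesis using unitB.hyps by blast
    next
      case F1: False
      show ?thesis
      proof (cases "v = q")
        case True then show ?thesis by blast
      next
        case False
        then have vY: "v \<in> V - X" using v F1 by blast
        then obtain u where u: "u \<in> X" "{u,v} \<in> E" using nbr by blast
        have "{u,v} \<noteq> {p,q}" using False vY unitB(3) u by (auto simp: doubleton_eq_iff)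
        then have "{u,v} \<in> ?E0" using u by auto
        then show ?thesis using u by blast
      qed
    qed
  qed
  have fin: "finite (insert a (insert b V))" using unitB.IH by simp
  have sub: "insert b X \<subseteq> insert a (insert b V)" using XV by blast
  show ?case by (intro conjI) (rule fin, rule sub, rule ok, rule nb)
qed

definition certB :: "'a set \<Rightarrow> 'a set set \<Rightarrow> 'a set \<Rightarrow> bool" where
  "certB V E X \<longleftrightarrow> (\<exists>v0 Ps. v0 \<in> V \<and> (v0 \<in> X \<longrightarrow> E = {}) \<and>
     (\<forall>P\<in>Ps. \<exists>u w. P = {u,w} \<and> u \<noteq> w \<and> u \<in> V \<and> w \<in> V) \<and>
     (\<forall>P\<in>Ps. \<forall>Q\<in>Ps. P \<noteq> Q \<longrightarrow> P \<inter> Q = {}) \<and> \<Union>Ps = V - {v0} \<and> (\<forall>P\<in>Ps. P \<notin> E) \<and>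
     (\<forall>S. v0 \<in> S \<longrightarrow> (\<forall>P\<in>Ps. P \<inter> S \<noteq> {}) \<longrightarrow> (\<exists>x\<in>X. cnbhd E x \<subseteq> S)))"

lemma cn_leaf_other: "z \<noteq> x \<Longrightarrow> z \<noteq> y \<Longrightarrow> z \<noteq> l \<Longrightarrow> cnbhd (insert {x,y} (insert {y,l} E)) z = cnbhd E z"
  unfolding cnbhd_def by (auto simp: doubleton_eq_iff)

lemma cn_leaf_x: "x \<noteq> y \<Longrightarrow> x \<noteq> l \<Longrightarrow> cnbhd (insert {x,y} (insert {y,l} E)) x = insert y (cnbhd E x)"
  unfolding cnbhd_def by (auto simp: doubleton_eq_iff)

lemma cn_leaf_l: "\<forall>e\<in>E. l \<notin> e \<Longrightarrow> l \<noteq> y \<Longrightarrow> l \<noteq> x \<Longrightarrow> cnbhd (insert {x,y} (insert {y,l} E)) l = {l,y}"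
  unfolding cnbhd_def by (auto simp: doubleton_eq_iff)

lemma cn_unit_other: "z \<notin> {p,a,b,q} \<Longrightarrow>
   cnbhd (insert {p,a} (insert {a,b} (insert {b,q} (if d then E - {{p,q}} else E)))) z = cnbhd E z"
  unfolding cnbhd_def by (auto simp: doubleton_eq_iff)

lemma cn_unit_b: "\<forall>e\<in>E. b \<notin> e \<Longrightarrow> b \<noteq> a \<Longrightarrow> b \<noteq> p \<Longrightarrow>
   cnbhd (insert {p,a} (insert {a,b} (insert {b,q} (if d then E - {{p,q}} else E)))) b = {b,a,q}"
  unfolding cnbhd_def by (auto simp: doubleton_eq_iff)

lemma cn_unit_p: "p \<noteq> a \<Longrightarrow> p \<noteq> b \<Longrightarrow> p \<noteq> q \<Longrightarrow>
   cnbhd (insert {p,a} (insert {a,b} (insert {b,q} (if d then E - {{p,q}} else E)))) p \<subseteq> insert a (cnbhd E p)"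
  unfolding cnbhd_def by (auto simp: doubleton_eq_iff split: if_splits)

lemma cn_X_notin: "edgeok V E X \<Longrightarrow> x \<in> X \<Longrightarrow> z \<in> X \<Longrightarrow> z \<noteq> x \<Longrightarrow> z \<notin> cnbhd E x"
  unfolding cnbhd_def using edgeok_D by fastforce

lemma djD: "\<forall>P\<in>Ps. \<forall>Q\<in>Ps. P \<noteq> Q \<longrightarrow> P \<inter> Q = {} \<Longrightarrow> P \<in> Ps \<Longrightarrow> Q \<in> Ps \<Longrightarrow> P \<noteq> Q \<Longrightarrow> P \<inter> Q = {}"
  by blast

lemma certB_E:
  assumes "certB V E X"
  obtains v0 Ps where "v0 \<in> V" "v0 \<in> X \<longrightarrow> E = {}"
    "\<forall>P\<in>Ps. \<exists>u w. P = {u,w} \<and> u \<noteq> w \<and> u \<in> V \<and> w \<in> V"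
    "\<forall>P\<in>Ps. \<forall>Q\<in>Ps. P \<noteq> Q \<longrightarrow> P \<inter> Q = {}" "\<Union>Ps = V - {v0}" "\<forall>P\<in>Ps. P \<notin> E"
    "\<forall>S. v0 \<in> S \<longrightarrow> (\<forall>P\<in>Ps. P \<inter> S \<noteq> {}) \<longrightarrow> (\<exists>x\<in>X. cnbhd E x \<subseteq> S)"
proof -
  from assms[unfolded certB_def] obtain v0 Ps where h: "v0 \<in> V \<and> (v0 \<in> X \<longrightarrow> E = {}) \<and>
     (\<forall>P\<in>Ps. \<exists>u w. P = {u,w} \<and> u \<noteq> w \<and> u \<in> V \<and> w \<in> V) \<and>
     (\<forall>P\<in>Ps. \<forall>Q\<in>Ps. P \<noteq> Q \<longrightarrow> P \<inter> Q = {}) \<and> \<Union>Ps = V - {v0} \<and> (\<forall>P\<in>Ps. P \<notin> E) \<and>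
     (\<forall>S. v0 \<in> S \<longrightarrow> (\<forall>P\<in>Ps. P \<inter> S \<noteq> {}) \<longrightarrow> (\<exists>x\<in>X. cnbhd E x \<subseteq> S))"
    by (elim exE) (rule that)
  show thesis
    apply (rule that[of v0 Ps])
    using h apply -
          apply (elim conjE, assumption)+
    done
qed

lemma famB_cert: "famB V E X \<Longrightarrow> certB V E X"
proof (induction rule: famB.induct)
  case (baseB v)
  show ?case unfolding certB_def
    by (rule exI[of _ v], rule exI[of _ "{}"]) (auto simp: cnbhd_def)
next
  case (leafB V E X x l y)
  have XV: "X \<subseteq> V" and eok: "edgeok V E X" using famB_inv[OF leafB.hyps(1)] by auto
  obtain v0 Ps where v0: "v0 \<in> V" and v0X: "v0 \<in> X \<longrightarrow> E = {}"
    and pr: "\<forall>P\<in>Ps. \<exists>u w. P = {u,w} \<and> u \<noteq> w \<and> u \<in> V \<and> w \<in> V"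
    and dj: "\<forall>P\<in>Ps. \<forall>Q\<in>Ps. P \<noteq> Q \<longrightarrow> P \<inter> Q = {}"
    and un: "\<Union>Ps = V - {v0}" and ne: "\<forall>P\<in>Ps. P \<notin> E"
    and val: "\<forall>S. v0 \<in> S \<longrightarrow> (\<forall>P\<in>Ps. P \<inter> S \<noteq> {}) \<longrightarrow> (\<exists>x\<in>X. cnbhd E x \<subseteq> S)"
    using certB_E[OF leafB.IH] by blast
  have xV: "x \<in> V" using XV leafB.hyps(2) by blast
  have lv: "l \<noteq> v0" "y \<noteq> v0" "l \<noteq> x" "y \<noteq> x" using v0 xV leafB.hyps by auto
  have Esub: "\<forall>e\<in>E. e \<subseteq> V" using edgeok_sub[OF eok XV] by blast
  let ?V = "insert l (insert y V)" and ?E = "insert {x,y} (insert {y,l} E)" and ?X = "insert l X"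
    and ?Ps = "insert {l,v0} Ps"
  have PsV: "\<forall>P\<in>Ps. P \<subseteq> V" using pr_sub[OF pr] by blast
  have c1: "y \<in> ?V" by simp
  have c2: "y \<in> ?X \<longrightarrow> ?E = {}" using leafB.hyps XV by auto
  have c3: "\<forall>P\<in>?Ps. \<exists>u w. P = {u,w} \<and> u \<noteq> w \<and> u \<in> ?V \<and> w \<in> ?V"
  proof
    fix P assume "P \<in> ?Ps"
    then show "\<exists>u w. P = {u,w} \<and> u \<noteq> w \<and> u \<in> ?V \<and> w \<in> ?V"
    proof
      assume "P = {l,v0}" then show ?thesis using lv v0 by blast
    next
      assume P: "P \<in> Ps"
      then obtain u w where "P = {u,w} \<and> u \<noteq> w \<and> u \<in> V \<and> w \<in> V" using pr by blast
      then show ?thesis by blast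
    qed
  qed
  have v0n: "v0 \<notin> \<Union>Ps" using un by blast
  have c4: "\<forall>P\<in>?Ps. \<forall>Q\<in>?Ps. P \<noteq> Q \<longrightarrow> P \<inter> Q = {}"
  proof (intro ballI impI)
    fix P Q assume P: "P \<in> ?Ps" and Q: "Q \<in> ?Ps" and PQ: "P \<noteq> Q"
    have gen: "R \<in> Ps \<Longrightarrow> {l,v0} \<inter> R = {}" for R
      using PsV v0n leafB.hyps(3) by blast
    show "P \<inter> Q = {}"
    proof (cases "P = {l,v0}")
      case True
      then have "Q \<in> Ps" using Q PQ by blast
      then show ?thesis using gen True by blast
    next
      case False
      then have P': "P \<in> Ps" using P by blast
      show ?thesis
      proof (cases "Q = {l,v0}")
        case True then show ?thesis using gen[OF P'] by blast
      next
        case False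
        then have "Q \<in> Ps" using Q by blast
        then show ?thesis using djD[OF dj P'] PQ by blast
      qed
    qed
  qed
  have c5: "\<Union>?Ps = ?V - {y}" using un leafB.hyps v0 lv by auto
  have c6: "\<forall>P\<in>?Ps. P \<notin> ?E"
  proof
    fix P assume P: "P \<in> ?Ps"
    show "P \<notin> ?E"
    proof (cases "P = {l,v0}")
      case True
      have "{l,v0} \<notin> E" using Esub leafB.hyps(3) by blast
      moreover have "{l,v0} \<noteq> {x,y}" "{l,v0} \<noteq> {y,l}" using lv leafB.hyps by (auto simp: doubleton_eq_iff)
      ultimately show ?thesis using True by blast
    next
      case False
      then have P': "P \<in> Ps" using P by blast
      then have "P \<notin> E" "P \<subseteq> V" using ne PsV by auto
      moreover have "y \<notin> P" using \<open>P \<subseteq> V\<close> leafB.hyps by blast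
      ultimately show ?thesis by auto
    qed
  qed
  have c7: "\<forall>S. y \<in> S \<longrightarrow> (\<forall>P\<in>?Ps. P \<inter> S \<noteq> {}) \<longrightarrow> (\<exists>z\<in>?X. cnbhd ?E z \<subseteq> S)"
  proof (intro allI impI)
    fix S assume yS: "y \<in> S" and meet: "\<forall>P\<in>?Ps. P \<inter> S \<noteq> {}"
    show "\<exists>z\<in>?X. cnbhd ?E z \<subseteq> S"
    proof (cases "l \<in> S")
      case True
      have "\<forall>e\<in>E. l \<notin> e" using Esub leafB.hyps(3) by blast
      then have "cnbhd ?E l = {l,y}" using cn_leaf_l lv leafB.hyps by metis
      then show ?thesis using True yS by auto
    next
      case False
      have "{l,v0} \<inter> S \<noteq> {}" using meet by blast
      then have v0S: "v0 \<in> S" using False by blast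
      have "\<forall>P\<in>Ps. P \<inter> S \<noteq> {}" using meet by blast
      then obtain z where z: "z \<in> X" "cnbhd E z \<subseteq> S" using val v0S by blast
      have zV: "z \<in> V" using z XV by blast
      show ?thesis
      proof (cases "z = x")
        case True
        then have "cnbhd ?E z = insert y (cnbhd E z)" using cn_leaf_x lv leafB.hyps by metis
        then have "cnbhd ?E z \<subseteq> S" using z yS by auto
        then show ?thesis using z by blast
      next
        case False
        then have "cnbhd ?E z = cnbhd E z" using cn_leaf_other zV leafB.hyps by metis
        then have "cnbhd ?E z \<subseteq> S" using z by auto
        then show ?thesis using z by blast
      qed
    qed
  qed
  show ?case unfolding certB_def
    by (rule exI[of _ y], rule exI[of _ ?Ps]) (intro conjI; (rule c1 | rule c2 | rule c3 | rule c4 | rule c5 | rule c6 | rule c7))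
next
  case (unitB V E X p q a b d)
  have XV: "X \<subseteq> V" and eok: "edgeok V E X" using famB_inv[OF unitB.hyps(1)] by auto
  obtain v0 Ps where v0: "v0 \<in> V" and v0X: "v0 \<in> X \<longrightarrow> E = {}"
    and pr: "\<forall>P\<in>Ps. \<exists>u w. P = {u,w} \<and> u \<noteq> w \<and> u \<in> V \<and> w \<in> V"
    and dj: "\<forall>P\<in>Ps. \<forall>Q\<in>Ps. P \<noteq> Q \<longrightarrow> P \<inter> Q = {}"
    and un: "\<Union>Ps = V - {v0}" and ne: "\<forall>P\<in>Ps. P \<notin> E"
    and val: "\<forall>S. v0 \<in> S \<longrightarrow> (\<forall>P\<in>Ps. P \<inter> S \<noteq> {}) \<longrightarrow> (\<exists>x\<in>X. cnbhd E x \<subseteq> S)"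
    using certB_E[OF unitB.IH] by blast
  have qY: "q \<in> V - X" using edgeok_D[OF eok unitB.hyps(2,3)] .
  have pV: "p \<in> V" using XV unitB.hyps(3) by blast
  have v0nX: "v0 \<notin> X" using v0X unitB.hyps(2) by blast
  have pv0: "p \<noteq> v0" using v0nX unitB.hyps(3) by blast
  have Esub: "\<forall>e\<in>E. e \<subseteq> V" using edgeok_sub[OF eok XV] by blast
  have PsV: "\<forall>P\<in>Ps. P \<subseteq> V" using pr_sub[OF pr] by blast
  obtain P0 where P0: "P0 \<in> Ps" "p \<in> P0" using un pV pv0 by blast
  obtain r where r: "P0 = {p,r}" "r \<noteq> p" using pr_two[OF pr P0] by blast
  have rV: "r \<in> V" using PsV P0 r by blast
  have rv0: "r \<noteq> v0" using un P0 r by blast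
  have rq: "r \<noteq> q" using ne P0 r unitB.hyps(2) by blast
  have dist: "a \<noteq> p" "b \<noteq> p" "a \<noteq> q" "b \<noteq> q" "a \<noteq> r" "b \<noteq> r" "a \<noteq> v0" "b \<noteq> v0" "p \<noteq> q"
    using unitB.hyps pV qY rV v0 by auto
  let ?Ezz = "if d then E - {{p,q}} else E"
  let ?V = "insert a (insert b V)" and ?E = "insert {p,a} (insert {a,b} (insert {b,q} ?Ezz))"
    and ?X = "insert b X" and ?Ps = "insert {p,b} (insert {a,r} (Ps - {{p,r}}))"
  have cnX: "z \<in> X \<Longrightarrow> z \<noteq> p \<Longrightarrow> cnbhd ?E z = cnbhd E z" for z
  proof -
    assume "z \<in> X" "z \<noteq> p"
    then have "z \<notin> {p,a,b,q}" using XV unitB.hyps qY by auto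
    then show ?thesis by (rule cn_unit_other)
  qed
  have c1: "v0 \<in> ?V" using v0 by simp
  have c2: "v0 \<in> ?X \<longrightarrow> ?E = {}" using v0nX dist by simp
  have c3: "\<forall>P\<in>?Ps. \<exists>u w. P = {u,w} \<and> u \<noteq> w \<and> u \<in> ?V \<and> w \<in> ?V"
  proof
    fix P assume P: "P \<in> ?Ps"
    show "\<exists>u w. P = {u,w} \<and> u \<noteq> w \<and> u \<in> ?V \<and> w \<in> ?V"
    proof (cases "P = {p,b}")
      case True then show ?thesis using dist pV by blast
    next
      case F: False
      show ?thesis
      proof (cases "P = {a,r}")
        case True then show ?thesis using dist rV by blast
      next
        case False
        then have "P \<in> Ps" using P F by blast
        then obtain u w where "P = {u,w} \<and> u \<noteq> w \<and> u \<in> V \<and> w \<in> V" using pr by blast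
        then show ?thesis by blast
      qed
    qed
  qed
  have oldQ: "Q \<in> Ps \<Longrightarrow> Q \<noteq> {p,r} \<Longrightarrow> Q \<inter> {p,r,a,b} = {}" for Q
  proof -
    assume Q: "Q \<in> Ps" "Q \<noteq> {p,r}"
    have "Q \<inter> P0 = {}" using djD[OF dj Q(1) P0(1)] Q(2) r(1) by blast
    then have "Q \<inter> {p,r} = {}" using r(1) by simp
    moreover have "a \<notin> Q" "b \<notin> Q" using PsV Q unitB.hyps by blast+
    ultimately show ?thesis by blast
  qed
  have c4: "\<forall>P\<in>?Ps. \<forall>Q\<in>?Ps. P \<noteq> Q \<longrightarrow> P \<inter> Q = {}"
  proof (intro ballI impI)
    fix P Q assume P: "P \<in> ?Ps" and Q: "Q \<in> ?Ps" and PQ: "P \<noteq> Q"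
    have pb_ar: "{p,b} \<inter> {a,r} = {}" using dist r unitB.hyps(6) by auto
    consider "P = {p,b}" | "P = {a,r}" | "P \<in> Ps" "P \<noteq> {p,r}" using P by blast
    then show "P \<inter> Q = {}"
    proof cases
      case 1
      consider "Q = {p,b}" | "Q = {a,r}" | "Q \<in> Ps" "Q \<noteq> {p,r}" using Q by blast
      then show ?thesis
      proof cases
        case 1 then show ?thesis using PQ \<open>P = {p,b}\<close> by simp
      next
        case 2 then show ?thesis using pb_ar \<open>P = {p,b}\<close> by simp
      next
        case 3 then show ?thesis using oldQ[of Q] \<open>P = {p,b}\<close> by blast
      qed
    next
      case 2
      consider "Q = {p,b}" | "Q = {a,r}" | "Q \<in> Ps" "Q \<noteq> {p,r}" using Q by blast
      then show ?thesis
      proof cases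
        case 1 then show ?thesis using pb_ar \<open>P = {a,r}\<close> by blast
      next
        case 2 then show ?thesis using PQ \<open>P = {a,r}\<close> by simp
      next
        case 3 then show ?thesis using oldQ[of Q] \<open>P = {a,r}\<close> by blast
      qed
    next
      case 3
      consider "Q = {p,b}" | "Q = {a,r}" | "Q \<in> Ps" "Q \<noteq> {p,r}" using Q by blast
      then show ?thesis
      proof cases
        case 1 then show ?thesis using oldQ[of P] 3 by blast
      next
        case 2 then show ?thesis using oldQ[of P] 3 by blast
      next
        case 4: 3 then show ?thesis using djD[OF dj] 3 PQ by blast
      qed
    qed
  qed
  have unm: "\<Union>(Ps - {{p,r}}) = \<Union>Ps - {p,r}"
  proof
    show "\<Union>(Ps - {{p,r}}) \<subseteq> \<Union>Ps - {p,r}" using oldQ by blast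
    show "\<Union>Ps - {p,r} \<subseteq> \<Union>(Ps - {{p,r}})" by blast
  qed
  have prin: "p \<in> \<Union>Ps" "r \<in> \<Union>Ps" using P0 r by blast+
  have c5: "\<Union>?Ps = ?V - {v0}"
  proof -
    have "\<Union>?Ps = {p,b,a,r} \<union> (\<Union>Ps - {p,r})" using unm by auto
    also have "\<dots> = {a,b} \<union> \<Union>Ps" using prin by auto
    also have "\<dots> = ?V - {v0}" using un dist by auto
    finally show ?thesis .
  qed
  have c6: "\<forall>P\<in>?Ps. P \<notin> ?E"
  proof
    fix P assume P: "P \<in> ?Ps"
    have E0E: "?Ezz \<subseteq> E" by auto
    consider "P = {p,b}" | "P = {a,r}" | "P \<in> Ps" "P \<noteq> {p,r}" using P by blast
    then show "P \<notin> ?E"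
    proof cases
      case 1
      have "{p,b} \<notin> E" using Esub unitB.hyps(5) by blast
      moreover have "{p,b} \<noteq> {p,a}" "{p,b} \<noteq> {a,b}" "{p,b} \<noteq> {b,q}"
        using dist unitB.hyps by (auto simp: doubleton_eq_iff)
      ultimately show ?thesis using 1 E0E by blast
    next
      case 2
      have "{a,r} \<notin> E" using Esub unitB.hyps(4) by blast
      moreover have "{a,r} \<noteq> {p,a}" "{a,r} \<noteq> {a,b}" "{a,r} \<noteq> {b,q}"
        using dist unitB.hyps r(2) by (auto simp: doubleton_eq_iff)
      ultimately show ?thesis using 2 E0E by blast
    next
      case 3
      have "P \<notin> E" "P \<subseteq> V" using ne PsV 3 by auto
      moreover have "a \<notin> P" "b \<notin> P" using \<open>P \<subseteq> V\<close> unitB.hyps by blast+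
      ultimately show ?thesis using E0E by auto
    qed
  qed
  have c7: "\<forall>S. v0 \<in> S \<longrightarrow> (\<forall>P\<in>?Ps. P \<inter> S \<noteq> {}) \<longrightarrow> (\<exists>z\<in>?X. cnbhd ?E z \<subseteq> S)"
  proof (intro allI impI)
    fix S assume v0S: "v0 \<in> S" and meet: "\<forall>P\<in>?Ps. P \<inter> S \<noteq> {}"
    have meetold: "Q \<in> Ps \<Longrightarrow> Q \<noteq> {p,r} \<Longrightarrow> Q \<inter> S \<noteq> {}" for Q using meet by blast
    have pb: "{p,b} \<inter> S \<noteq> {}" and ar: "{a,r} \<inter> S \<noteq> {}" using meet by blast+
    have app: "\<exists>z\<in>X. cnbhd E z \<subseteq> T" if "v0 \<in> T" "{p,r} \<inter> T \<noteq> {}" "\<forall>Q\<in>Ps - {{p,r}}. Q \<inter> T \<noteq> {}" for T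
    proof -
      have "\<forall>Q\<in>Ps. Q \<inter> T \<noteq> {}" using that by blast
      then show ?thesis using val that(1) by blast
    qed
    have goodz: "\<exists>z\<in>?X. cnbhd ?E z \<subseteq> S" if z: "z \<in> X" "z \<noteq> p" "cnbhd E z \<subseteq> S" for z
    proof -
      have "cnbhd ?E z \<subseteq> S" using cnX[OF z(1,2)] z(3) by simp
      then show ?thesis using z(1) by blast
    qed
    show "\<exists>z\<in>?X. cnbhd ?E z \<subseteq> S"
    proof (cases "a \<in> S \<and> b \<in> S \<and> q \<in> S")
      case True
      have "\<forall>e\<in>E. b \<notin> e" using Esub unitB.hyps(5) by auto
      then have "cnbhd ?E b = {b,a,q}"
        by (rule cn_unit_b) (use unitB.hyps(6) dist in auto)
      then have "cnbhd ?E b \<subseteq> S" using True by auto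
      then show ?thesis by blast
    next
      case notall: False
      show ?thesis
      proof (cases "q \<in> S")
        case False
        let ?T = "insert p S"
        have "\<forall>Q\<in>Ps - {{p,r}}. Q \<inter> ?T \<noteq> {}" using meetold by blast
        then obtain z where z: "z \<in> X" "cnbhd E z \<subseteq> ?T" using app[of ?T] v0S by blast
        have zp: "z \<noteq> p"
        proof
          assume "z = p"
          then have "q \<in> cnbhd E z" unfolding cnbhd_def using unitB.hyps(2) by (auto simp: insert_commute)
          then show False using z False dist by blast
        qed
        have "p \<notin> cnbhd E z" using cn_X_notin[OF eok z(1) unitB.hyps(3)] zp by blast
        then have "cnbhd E z \<subseteq> S" using z by blast
        then show ?thesis using goodz z zp by blast
      next
        case qS: True
        show ?thesis
        proof (cases "p \<in> S")
          case pS: True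
          show ?thesis
          proof (cases "r \<in> S")
            case True
            let ?T = "S - {p}"
            have "\<forall>Q\<in>Ps - {{p,r}}. Q \<inter> ?T \<noteq> {}" using meetold oldQ by blast
            moreover have "{p,r} \<inter> ?T \<noteq> {}" using True r by blast
            ultimately obtain z where z: "z \<in> X" "cnbhd E z \<subseteq> ?T" using app[of ?T] v0S pv0 by blast
            have zp: "z \<noteq> p" using z unfolding cnbhd_def by blast
            then show ?thesis using goodz z by blast
          next
            case False
            then have aS: "a \<in> S" using ar by blast
            have "\<forall>Q\<in>Ps - {{p,r}}. Q \<inter> S \<noteq> {}" using meetold by blast
            then obtain z where z: "z \<in> X" "cnbhd E z \<subseteq> S" using app[of S] v0S pS by blast
            show ?thesis
            proof (cases "z = p")
              case True
              have "cnbhd ?E p \<subseteq> insert a (cnbhd E p)" using cn_unit_p dist by metis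
              then show ?thesis using z True aS by blast
            next
              case False then show ?thesis using goodz z by blast
            qed
          qed
        next
          case pS: False
          then have bS: "b \<in> S" using pb by blast
          then have "a \<notin> S" using notall qS by blast
          then have rS: "r \<in> S" using ar by blast
          have "\<forall>Q\<in>Ps - {{p,r}}. Q \<inter> S \<noteq> {}" using meetold by blast
          then obtain z where z: "z \<in> X" "cnbhd E z \<subseteq> S" using app[of S] v0S rS by blast
          have zp: "z \<noteq> p" using z pS unfolding cnbhd_def by blast
          then show ?thesis using goodz z by blast
        qed
      qed
    qed
  qed
  show ?case unfolding certB_def
    by (rule exI[of _ v0], rule exI[of _ ?Ps]) (intro conjI; (rule c1 | rule c2 | rule c3 | rule c4 | rule c5 | rule c6 | rule c7))
qed

definition matchB :: "'a set \<Rightarrow> 'a set set \<Rightarrow> 'a set \<Rightarrow> bool" where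
  "matchB V E X \<longleftrightarrow> (\<forall>x0\<in>X. \<exists>g. inj_on g (X - {x0}) \<and> (\<forall>x\<in>X - {x0}. {x, g x} \<in> E))"

lemma matchB_E: "matchB V E X \<Longrightarrow> x0 \<in> X \<Longrightarrow> (\<And>g. inj_on g (X - {x0}) \<Longrightarrow> (\<forall>x\<in>X - {x0}. {x, g x} \<in> E) \<Longrightarrow> thesis) \<Longrightarrow> thesis"
  unfolding matchB_def by blast

lemma inj_upd: "inj_on f A \<Longrightarrow> c \<notin> f ` A \<Longrightarrow> x \<notin> A \<Longrightarrow> inj_on (f(x := c)) (insert x A)"
  unfolding inj_on_def by (auto simp: image_iff)

lemma famB_match: "famB V E X \<Longrightarrow> matchB V E X"
proof (induction rule: famB.induct)
  case (baseB v)
  show ?case unfolding matchB_def by auto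
next
  case (leafB V E X x l y)
  have XV: "X \<subseteq> V" and eok: "edgeok V E X" using famB_inv[OF leafB.hyps(1)] by auto
  have Esub: "\<forall>e\<in>E. e \<subseteq> V" using edgeok_sub[OF eok XV] by blast
  let ?E = "insert {x,y} (insert {y,l} E)"
  have lX: "l \<notin> X" using XV leafB.hyps by blast
  show ?case unfolding matchB_def
  proof
    fix x0 assume x0: "x0 \<in> insert l X"
    show "\<exists>g. inj_on g (insert l X - {x0}) \<and> (\<forall>z\<in>insert l X - {x0}. {z, g z} \<in> ?E)"
    proof (cases "x0 = l")
      case True
      obtain g where g: "inj_on g (X - {x})" "\<forall>z\<in>X - {x}. {z, g z} \<in> E"
        using matchB_E[OF leafB.IH leafB.hyps(2)] by blast
      have gV: "g z \<in> V" if "z \<in> X - {x}" for z using g(2) that Esub by blast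
      have dom: "insert l X - {x0} = insert x (X - {x})" using True lX leafB.hyps(2) by blast
      have inj: "inj_on (g(x := y)) (insert x (X - {x}))"
        by (rule inj_upd[OF g(1)]) (use gV leafB.hyps(4) in auto)
      have ed: "\<forall>z\<in>insert x (X - {x}). {z, (g(x := y)) z} \<in> ?E" using g(2) by auto
      show ?thesis using inj ed dom by metis
    next
      case False
      then have x0X: "x0 \<in> X" using x0 by blast
      obtain g where g: "inj_on g (X - {x0})" "\<forall>z\<in>X - {x0}. {z, g z} \<in> E"
        using matchB_E[OF leafB.IH x0X] by blast
      have gV: "g z \<in> V" if "z \<in> X - {x0}" for z using g(2) that Esub by blast
      have dom: "insert l X - {x0} = insert l (X - {x0})" using False by blast
      have inj: "inj_on (g(l := y)) (insert l (X - {x0}))"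
        by (rule inj_upd[OF g(1)]) (use gV leafB.hyps(4) lX in auto)
      have ed: "\<forall>z\<in>insert l (X - {x0}). {z, (g(l := y)) z} \<in> ?E"
        using g(2) lX by (auto simp: insert_commute)
      show ?thesis using inj ed dom by metis
    qed
  qed
next
  case (unitB V E X p q a b d)
  have XV: "X \<subseteq> V" and eok: "edgeok V E X" using famB_inv[OF unitB.hyps(1)] by auto
  have Esub: "\<forall>e\<in>E. e \<subseteq> V" using edgeok_sub[OF eok XV] by blast
  have qY: "q \<in> V - X" using edgeok_D[OF eok unitB.hyps(2,3)] .
  let ?Ezz = "if d then E - {{p,q}} else E"
  let ?E = "insert {p,a} (insert {a,b} (insert {b,q} ?Ezz))"
  have bX: "b \<notin> X" "a \<notin> X" using XV unitB.hyps by auto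
  have pV: "p \<in> V" using XV unitB.hyps by blast
  have keep: "{z, w} \<in> ?E" if "z \<in> X" "z \<noteq> p" "{z,w} \<in> E" for z w
  proof -
    have "z \<noteq> q" using that qY by blast
    then have "{z,w} \<noteq> {p,q}" using that(2) by (auto simp: doubleton_eq_iff)
    then show ?thesis using that(3) by auto
  qed
  show ?case unfolding matchB_def
  proof
    fix x0 assume x0: "x0 \<in> insert b X"
    show "\<exists>g. inj_on g (insert b X - {x0}) \<and> (\<forall>z\<in>insert b X - {x0}. {z, g z} \<in> ?E)"
    proof (cases "x0 = b")
      case True
      obtain g where g: "inj_on g (X - {p})" "\<forall>z\<in>X - {p}. {z, g z} \<in> E"
        using matchB_E[OF unitB.IH unitB.hyps(3)] by blast
      have gV: "g z \<in> V" if "z \<in> X - {p}" for z using g(2) that Esub by blast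
      have dom: "insert b X - {x0} = insert p (X - {p})" using True bX unitB.hyps(3) by blast
      have inj: "inj_on (g(p := a)) (insert p (X - {p}))"
        by (rule inj_upd[OF g(1)]) (use gV unitB.hyps(4) in auto)
      have ed: "\<forall>z\<in>insert p (X - {p}). {z, (g(p := a)) z} \<in> ?E"
      proof
        fix z assume z: "z \<in> insert p (X - {p})"
        show "{z, (g(p := a)) z} \<in> ?E"
        proof (cases "z = p")
          case True then show ?thesis by simp
        next
          case False
          then have zX: "z \<in> X - {p}" using z by blast
          then have "{z, g z} \<in> ?E" using keep[of z "g z"] g(2) by blast
          then show ?thesis using False by simp
        qed
      qed
      show ?thesis using inj ed dom by metis
    next
      case False
      then have x0X: "x0 \<in> X" using x0 by blast
      obtain g where g: "inj_on g (X - {x0})" "\<forall>z\<in>X - {x0}. {z, g z} \<in> E"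
        using matchB_E[OF unitB.IH x0X] by blast
      have gV: "g z \<in> V" if "z \<in> X - {x0}" for z using g(2) that Esub by blast
      have dom: "insert b X - {x0} = insert b (X - {x0})" using False by blast
      show ?thesis
      proof (cases "x0 \<noteq> p \<and> d \<and> g p = q")
        case True
        let ?g = "g(p := a, b := q)"
        have pin: "p \<in> X - {x0}" using True unitB.hyps(3) by blast
        have inj: "inj_on ?g (insert b (X - {x0}))"
        proof (rule inj_onI)
          fix u v assume u: "u \<in> insert b (X - {x0})" and v: "v \<in> insert b (X - {x0})" and e: "?g u = ?g v"
          have gi: "u' \<in> X - {x0} \<Longrightarrow> v' \<in> X - {x0} \<Longrightarrow> g u' = g v' \<Longrightarrow> u' = v'" for u' v'
            using g(1) by (meson inj_onD)
          have bp: "b \<noteq> p" using unitB.hyps pV by blast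
          have gq: "u' \<in> X - {x0} \<Longrightarrow> u' \<noteq> p \<Longrightarrow> g u' \<noteq> q" for u'
            using gi pin True by metis
          have ga: "u' \<in> X - {x0} \<Longrightarrow> g u' \<noteq> a" for u' using gV unitB.hyps(4) by blast
          have hb: "?g b = q" by simp
          have hp: "?g p = a" using bp by simp
          have ho: "z \<noteq> p \<Longrightarrow> z \<noteq> b \<Longrightarrow> ?g z = g z" for z by simp
          have qa: "q \<noteq> a" using qY unitB.hyps(4) by blast
          have cl: "w = b \<or> w = p \<or> (w \<in> X - {x0} \<and> w \<noteq> p \<and> w \<noteq> b)" if "w \<in> insert b (X - {x0})" for w
            using that by blast
          show "u = v"
          proof -
            consider "u = b" | "u = p" | "u \<in> X - {x0}" "u \<noteq> p" "u \<noteq> b" using cl[OF u] by blast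
            then show ?thesis
            proof cases
              case 1
              consider "v = b" | "v = p" | "v \<in> X - {x0}" "v \<noteq> p" "v \<noteq> b" using cl[OF v] by blast
              then show ?thesis
              proof cases
                case 1 then show ?thesis using \<open>u = b\<close> by simp
              next
                case 2 then show ?thesis using \<open>u = b\<close> e hb hp qa by simp
              next
                case 3 then show ?thesis using \<open>u = b\<close> e hb ho[of v] gq[of v] by simp
              qed
            next
              case 2
              consider "v = b" | "v = p" | "v \<in> X - {x0}" "v \<noteq> p" "v \<noteq> b" using cl[OF v] by blast
              then show ?thesis
              proof cases
                case 1 then show ?thesis using \<open>u = p\<close> e hb hp qa by simp
              next
                case 2 then show ?thesis using \<open>u = p\<close> by simp
              next
                case 3 then show ?thesis using \<open>u = p\<close> e hp ho[of v] ga[of v] by simp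
              qed
            next
              case 3
              consider "v = b" | "v = p" | "v \<in> X - {x0}" "v \<noteq> p" "v \<noteq> b" using cl[OF v] by blast
              then show ?thesis
              proof cases
                case 1 then show ?thesis using 3 e hb ho[of u] gq[of u] by simp
              next
                case 2 then show ?thesis using 3 e hp ho[of u] ga[of u] by simp
              next
                case 4: 3 then show ?thesis using 3 e ho[of u] ho[of v] gi[of u v] by simp
              qed
            qed
          qed
        qed
        have ed: "\<forall>z\<in>insert b (X - {x0}). {z, ?g z} \<in> ?E"
        proof
          fix z assume z: "z \<in> insert b (X - {x0})"
          show "{z, ?g z} \<in> ?E"
          proof (cases "z = b")
            case True then show ?thesis by simp
          next
            case F: False
            show ?thesis
            proof (cases "z = p")
              case True then show ?thesis using unitB.hyps pV by auto
            next
              case False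
              then have "{z, g z} \<in> ?E" using keep g(2) z F by blast
              then show ?thesis using False F by simp
            qed
          qed
        qed
        show ?thesis using inj ed dom by metis
      next
        case notT: False
        let ?g = "g(b := a)"
        have inj: "inj_on ?g (insert b (X - {x0}))"
          by (rule inj_upd[OF g(1)]) (use gV unitB.hyps(4) bX in auto)
        have ed: "\<forall>z\<in>insert b (X - {x0}). {z, ?g z} \<in> ?E"
        proof
          fix z assume z: "z \<in> insert b (X - {x0})"
          show "{z, ?g z} \<in> ?E"
          proof (cases "z = b")
            case True then show ?thesis by (simp add: insert_commute)
          next
            case F: False
            then have zX: "z \<in> X - {x0}" using z by blast
            have ge: "{z, g z} \<in> E" using g(2) zX by blast
            show ?thesis
            proof (cases "z = p")
              case True
              have "{z, g z} \<in> ?Ezz"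
              proof (cases d)
                case True
                then have "g p \<noteq> q" using notT \<open>z = p\<close> zX by blast
                then have "{z, g z} \<noteq> {p,q}" using \<open>z = p\<close> qY unitB.hyps(3) by (auto simp: doubleton_eq_iff)
                then show ?thesis using ge True by simp
              next
                case False then show ?thesis using ge by simp
              qed
              then show ?thesis using F by simp
            next
              case False
              then have "{z, g z} \<in> ?E" using keep ge zX by blast
              then show ?thesis using F by simp
            qed
          qed
        qed
        show ?thesis using inj ed dom by metis
      qed
    qed
  qed
qed

lemma famB_main:
  assumes fb: "famB V E X"
  shows "mb_atomic (nbhd_hypergraph V E (V - X))"
proof -
  have fin: "finite V" and XV: "X \<subseteq> V" and eok: "edgeok V E X"
    and nbr: "\<forall>v\<in>V - X. \<exists>x\<in>X. {x,v} \<in> E" using famB_inv[OF fb] by auto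
  define H where "H = {cnbhd E v | v. v \<in> V - (V - X)}"
  have H: "H = {cnbhd E v | v. v \<in> X}" unfolding H_def using XV by (metis double_diff order_refl)
  have hg: "nbhd_hypergraph V E (V - X) = (V, H)" unfolding nbhd_hypergraph_def H_def by simp
  have mw: "mwin V H {} {}"
  proof -
    obtain v0 Ps where v0: "v0 \<in> V" and "v0 \<in> X \<longrightarrow> E = {}"
      and pr: "\<forall>P\<in>Ps. \<exists>u w. P = {u,w} \<and> u \<noteq> w \<and> u \<in> V \<and> w \<in> V"
      and dj: "\<forall>P\<in>Ps. \<forall>Q\<in>Ps. P \<noteq> Q \<longrightarrow> P \<inter> Q = {}"
      and "\<Union>Ps = V - {v0}" "\<forall>P\<in>Ps. P \<notin> E"
      and val: "\<forall>S. v0 \<in> S \<longrightarrow> (\<forall>P\<in>Ps. P \<inter> S \<noteq> {}) \<longrightarrow> (\<exists>x\<in>X. cnbhd E x \<subseteq> S)"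
      by (rule certB_E[OF famB_cert[OF fb]])
    have val': "\<forall>S. v0 \<in> S \<longrightarrow> (\<forall>P\<in>Ps. P \<inter> S \<noteq> {}) \<longrightarrow> (\<exists>e\<in>H. e \<subseteq> S)"
    proof (intro allI impI)
      fix S assume "v0 \<in> S" "\<forall>P\<in>Ps. P \<inter> S \<noteq> {}"
      then obtain x where "x \<in> X" "cnbhd E x \<subseteq> S" using val by blast
      then show "\<exists>e\<in>H. e \<subseteq> S" unfolding H by blast
    qed
    show ?thesis by (rule maker_cert[OF fin v0 pr dj val'])
  qed
  have crit: "\<forall>e\<in>H. \<not> mwin V (H - {e}) {} {}"
  proof
    fix e assume "e \<in> H"
    then obtain x0 where x0: "x0 \<in> X" "e = cnbhd E x0" unfolding H by blast
    obtain g where g: "inj_on g (X - {x0})" "\<forall>x\<in>X - {x0}. {x, g x} \<in> E"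
      using matchB_E[OF famB_match[OF fb] x0(1)] by blast
    have gY: "g x \<in> V - X" if "x \<in> X - {x0}" for x
      using edgeok_D[OF eok] g(2) that by blast
    define Qs where "Qs = (\<lambda>x. {x, g x}) ` (X - {x0})"
    have pr: "\<forall>P\<in>Qs. \<exists>u w. P = {u,w} \<and> u \<noteq> w \<and> u \<in> V \<and> w \<in> V"
    proof
      fix P assume "P \<in> Qs"
      then obtain x where x: "x \<in> X - {x0}" "P = {x, g x}" unfolding Qs_def by blast
      then have "x \<noteq> g x" "x \<in> V" "g x \<in> V" using gY[OF x(1)] XV by auto
      then show "\<exists>u w. P = {u,w} \<and> u \<noteq> w \<and> u \<in> V \<and> w \<in> V" using x by blast
    qed
    have dj: "\<forall>P\<in>Qs. \<forall>Q\<in>Qs. P \<noteq> Q \<longrightarrow> P \<inter> Q = {}"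
    proof (intro ballI impI)
      fix P Q assume "P \<in> Qs" "Q \<in> Qs" and PQ: "P \<noteq> Q"
      then obtain x y where x: "x \<in> X - {x0}" "P = {x, g x}" and y: "y \<in> X - {x0}" "Q = {y, g y}"
        unfolding Qs_def by blast
      have xy: "x \<noteq> y" using PQ x y by blast
      have "g x \<noteq> g y" using g(1) x(1) y(1) xy by (meson inj_onD)
      moreover have "g x \<notin> X" "g y \<notin> X" using gY x(1) y(1) by auto
      ultimately show "P \<inter> Q = {}" using x y xy by auto
    qed
    have cov: "\<forall>e'\<in>H - {e}. \<exists>P\<in>Qs. P \<subseteq> e'"
    proof
      fix e' assume e': "e' \<in> H - {e}"
      then obtain x where x: "x \<in> X" "e' = cnbhd E x" unfolding H by blast
      have "x \<noteq> x0" using e' x x0 by blast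
      then have xx: "x \<in> X - {x0}" using x by blast
      have "{g x, x} \<in> E" using g(2) xx by (simp add: insert_commute)
      then have "{x, g x} \<subseteq> e'" using x(2) unfolding cnbhd_def by blast
      then show "\<exists>P\<in>Qs. P \<subseteq> e'" using xx unfolding Qs_def by blast
    qed
    show "\<not> mwin V (H - {e}) {} {}" by (rule breaker_pairing[OF pr dj cov])
  qed
  have atom: "\<forall>v\<in>V. \<exists>e\<in>H. v \<in> e"
  proof
    fix v assume v: "v \<in> V"
    show "\<exists>e\<in>H. v \<in> e"
    proof (cases "v \<in> X")
      case True
      then show ?thesis unfolding H cnbhd_def by blast
    next
      case False
      then obtain x where x: "x \<in> X" "{x,v} \<in> E" using nbr v by blast
      then have "v \<in> cnbhd E x" unfolding cnbhd_def by (simp add: insert_commute)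
      then show ?thesis using x unfolding H by blast
    qed
  qed
  show ?thesis unfolding hg mb_atomic_def mb_critical_def maker_wins_def
    using mw crit atom by simp
qed

definition tpath :: "'a set set \<Rightarrow> 'a list \<Rightarrow> bool" where
  "tpath ET vs \<longleftrightarrow> distinct vs \<and> (\<forall>i. Suc i < length vs \<longrightarrow> {vs!i, vs!Suc i} \<in> ET)"

lemma wf_edgeD: "wf_graph V E \<Longrightarrow> e \<in> E \<Longrightarrow> \<exists>u v. u \<noteq> v \<and> e = {u,v} \<and> u \<in> V \<and> v \<in> V"
  unfolding wf_graph_def by blast

lemma tree_leaf:
  assumes T: "is_tree VT ET" and uv: "u \<in> VT" "v \<in> VT" "u \<noteq> v"
  shows "\<exists>l x. l \<in> VT \<and> x \<in> VT \<and> l \<noteq> x \<and> {l,x} \<in> ET \<and> (\<forall>e\<in>ET. l \<in> e \<longrightarrow> e = {l,x})"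
proof -
  have wf: "wf_graph VT ET" and con: "connected_graph VT ET" and nc: "\<not> (\<exists>cs. is_cycle ET cs)"
    using T unfolding is_tree_def by auto
  have fin: "finite VT" using wf unfolding wf_graph_def by blast
  have "(u,v) \<in> (adj_rel ET)\<^sup>*" using con uv unfolding connected_graph_def by blast
  then obtain w where "(u,w) \<in> adj_rel ET" using uv(3) by (metis converse_rtranclE)
  then have uw: "{u,w} \<in> ET" unfolding adj_rel_def by simp
  then obtain a b where ab: "a \<noteq> b" "{u,w} = {a,b}" "a \<in> VT" "b \<in> VT" using wf_edgeD[OF wf] by blast
  let ?P = "\<lambda>vs. tpath ET vs \<and> set vs \<subseteq> VT"
  have P0: "?P [a,b]" unfolding tpath_def using ab uw by (auto simp: less_Suc_eq nth_Cons')
  have bnd: "\<forall>vs. ?P vs \<longrightarrow> length vs < card VT + 1"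
  proof (intro allI impI)
    fix vs assume "?P vs"
    then have "distinct vs" "set vs \<subseteq> VT" unfolding tpath_def by auto
    then have "length vs \<le> card VT" using fin by (metis card_mono distinct_card)
    then show "length vs < card VT + 1" by simp
  qed
  obtain vs where vs: "?P vs" and mx: "\<forall>ws. ?P ws \<longrightarrow> length ws \<le> length vs"
    using ex_has_greatest_nat[of ?P "[a,b]" length "card VT + 1", OF P0 bnd] by blast
  define n where "n = length vs"
  have n2: "n \<ge> 2" using mx P0 n_def by fastforce
  have dis: "distinct vs" and ed: "\<And>i. Suc i < n \<Longrightarrow> {vs!i, vs!Suc i} \<in> ET" and sv: "set vs \<subseteq> VT"
    using vs unfolding tpath_def n_def by auto
  define l where "l = vs ! (n - 1)"
  define x where "x = vs ! (n - 2)"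
  have lV: "l \<in> VT" "x \<in> VT" using sv n2 unfolding l_def x_def n_def by auto
  have lx: "l \<noteq> x" using dis n2 unfolding l_def x_def n_def by (simp add: nth_eq_iff_index_eq)
  have exl: "{l,x} \<in> ET"
  proof -
    have "{vs!(n-2), vs!Suc (n-2)} \<in> ET" using ed n2 by simp
    moreover have "Suc (n-2) = n - 1" using n2 by simp
    ultimately show ?thesis unfolding l_def x_def by (simp add: insert_commute)
  qed
  have "vs \<noteq> []" using n2 unfolding n_def by auto
  then have lastl: "last vs = l" unfolding l_def n_def by (simp add: last_conv_nth)
  have uniq: "\<forall>e\<in>ET. l \<in> e \<longrightarrow> e = {l,x}"
  proof (intro ballI impI)
    fix e assume e: "e \<in> ET" and le: "l \<in> e"
    obtain c d where cd: "c \<noteq> d" "e = {c,d}" "c \<in> VT" "d \<in> VT" using wf_edgeD[OF wf e] by blast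
    obtain w where w: "e = {l,w}" "w \<noteq> l" "w \<in> VT" using cd le by auto
    show "e = {l,x}"
    proof (rule ccontr)
      assume ne: "e \<noteq> {l,x}"
      then have wx: "w \<noteq> x" using w by blast
      show False
      proof (cases "w \<in> set vs")
        case False
        let ?ws = "vs @ [w]"
        have "?P ?ws"
          unfolding tpath_def
        proof (intro conjI allI impI)
          show "distinct ?ws" using dis False by simp
          show "set ?ws \<subseteq> VT" using sv w by simp
          fix i assume i: "Suc i < length ?ws"
          show "{?ws ! i, ?ws ! Suc i} \<in> ET"
          proof (cases "Suc i < n")
            case True
            then show ?thesis using ed[OF True] unfolding n_def by (simp add: nth_append)
          next
            case False
            then have "i = n - 1" using i n_def by simp
            then have "?ws ! i = l" "?ws ! Suc i = w" using n2 unfolding l_def n_def by (auto simp: nth_append)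
            then show ?thesis using w e by simp
          qed
        qed
        then have "length ?ws \<le> length vs" using mx by blast
        then show False by simp
      next
        case True
        then obtain i where i: "i < n" "vs ! i = w" unfolding n_def by (metis in_set_conv_nth)
        have "i \<noteq> n - 1" using i w unfolding l_def by auto
        moreover have "i \<noteq> n - 2" using i wx unfolding x_def by auto
        ultimately have i3: "i + 3 \<le> n" using i n2 by linarith
        let ?cs = "drop i vs"
        have lc: "length ?cs = n - i" unfolding n_def by simp
        have "is_cycle ET ?cs"
          unfolding is_cycle_def
        proof (intro conjI allI impI)
          show "3 \<le> length ?cs" using lc i3 by simp
          show "distinct ?cs" using dis by simp
          fix j assume j: "j < length ?cs"
          show "{?cs ! j, ?cs ! ((j + 1) mod length ?cs)} \<in> ET"
          proof (cases "j + 1 < length ?cs")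
            case True
            then have "(j + 1) mod length ?cs = j + 1" by simp
            moreover have "Suc (i + j) < n" using True lc by simp
            ultimately show ?thesis using ed[of "i + j"] unfolding n_def by simp
          next
            case False
            then have jj: "j + 1 = length ?cs" using j by simp
            then have "(j + 1) mod length ?cs = 0" by simp
            moreover have "?cs ! 0 = w" using i unfolding n_def by simp
            moreover have "i + j = n - 1" using jj lc i by simp
            then have "?cs ! j = l" using i unfolding l_def n_def by simp
            ultimately show ?thesis using w e by (simp add: insert_commute)
          qed
        qed
        then show False using nc by blast
      qed
    qed
  qed
  show ?thesis using lV lx exl uniq by blast
qed

lemma leaf_connect:
  assumes lx: "\<forall>e\<in>ET. l \<in> e \<longrightarrow> e = {l,x}" and lnx: "l \<noteq> x"
  shows "(u,v) \<in> (adj_rel ET)\<^sup>* \<Longrightarrow> u \<noteq> l \<Longrightarrow>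
    (v \<noteq> l \<longrightarrow> (u,v) \<in> (adj_rel (ET - {{l,x}}))\<^sup>*) \<and> (v = l \<longrightarrow> (u,x) \<in> (adj_rel (ET - {{l,x}}))\<^sup>*)"
proof (induction rule: rtrancl_induct)
  case base
  then show ?case by simp
next
  case (step w v)
  have wv: "{w,v} \<in> ET" using step.hyps(2) unfolding adj_rel_def by simp
  show ?case
  proof (cases "w = l")
    case True
    then have ux: "(u,x) \<in> (adj_rel (ET - {{l,x}}))\<^sup>*" using step by blast
    have "{w,v} = {l,x}" using lx[rule_format, OF wv] True by simp
    then have "v = x" using True lnx by (auto simp: doubleton_eq_iff)
    then show ?thesis using ux lnx by simp
  next
    case False
    then have uw: "(u,w) \<in> (adj_rel (ET - {{l,x}}))\<^sup>*" using step by blast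
    show ?thesis
    proof (cases "v = l")
      case True
      have "{w,v} = {l,x}" using lx[rule_format, OF wv] True by simp
      then have "w = x" using True lnx False by (auto simp: doubleton_eq_iff)
      then show ?thesis using uw True by simp
    next
      case vl: False
      have "{w,v} \<noteq> {l,x}" using False vl by (auto simp: doubleton_eq_iff)
      then have "(w,v) \<in> adj_rel (ET - {{l,x}})" using wv unfolding adj_rel_def by simp
      then show ?thesis using uw vl by (meson rtrancl.rtrancl_into_rtrancl)
    qed
  qed
qed

lemma tree_remove_leaf:
  assumes T: "is_tree VT ET" and l: "l \<in> VT" "x \<in> VT" "l \<noteq> x" "{l,x} \<in> ET"
    and lx: "\<forall>e\<in>ET. l \<in> e \<longrightarrow> e = {l,x}"
  shows "is_tree (VT - {l}) (ET - {{l,x}})"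
proof -
  have wf: "wf_graph VT ET" and con: "connected_graph VT ET" and nc: "\<not> (\<exists>cs. is_cycle ET cs)"
    using T unfolding is_tree_def by auto
  have wf': "wf_graph (VT - {l}) (ET - {{l,x}})"
    unfolding wf_graph_def
  proof (intro conjI ballI)
    show "finite (VT - {l})" using wf unfolding wf_graph_def by simp
    fix e assume e: "e \<in> ET - {{l,x}}"
    then obtain c d where cd: "c \<noteq> d" "e = {c,d}" "c \<in> VT" "d \<in> VT" using wf_edgeD[OF wf] by blast
    have "l \<notin> e" using lx e by blast
    then show "\<exists>u v. u \<noteq> v \<and> e = {u, v} \<and> u \<in> VT - {l} \<and> v \<in> VT - {l}" using cd by blast
  qed
  have con': "connected_graph (VT - {l}) (ET - {{l,x}})"
    unfolding connected_graph_def
  proof (intro ballI)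
    fix u v assume u: "u \<in> VT - {l}" and v: "v \<in> VT - {l}"
    have "(u,v) \<in> (adj_rel ET)\<^sup>*" using con u v unfolding connected_graph_def by blast
    then show "(u,v) \<in> (adj_rel (ET - {{l,x}}))\<^sup>*" using leaf_connect[OF lx l(3)] u v by blast
  qed
  have nc': "\<not> (\<exists>cs. is_cycle (ET - {{l,x}}) cs)"
  proof
    assume "\<exists>cs. is_cycle (ET - {{l,x}}) cs"
    then obtain cs where "is_cycle (ET - {{l,x}}) cs" by blast
    then have "is_cycle ET cs" unfolding is_cycle_def by blast
    then show False using nc by blast
  qed
  have ne: "VT - {l} \<noteq> {}" using l by blast
  show ?thesis unfolding is_tree_def using wf' con' nc' ne by blast
qed

lemma tree_famB_aux:
  "\<forall>VT ET M f. card VT = n \<longrightarrow> is_tree VT ET \<longrightarrow> M \<inter> VT = {} \<longrightarrow> bij_betw f ET M \<longrightarrow>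
     famB (VT \<union> M) {{z, f e} | z e. e \<in> ET \<and> z \<in> e} VT"
proof (induction n rule: less_induct)
  case (less n)
  show ?case
  proof (intro allI impI)
    fix VT ET M and f :: "'a set \<Rightarrow> 'a"
    assume cn: "card VT = n" and T: "is_tree VT ET" and dM: "M \<inter> VT = {}" and bj: "bij_betw f ET M"
    have wf: "wf_graph VT ET" and ne: "VT \<noteq> {}" using T unfolding is_tree_def by auto
    have fin: "finite VT" using wf unfolding wf_graph_def by blast
    show "famB (VT \<union> M) {{z, f e} | z e. e \<in> ET \<and> z \<in> e} VT"
    proof (cases "\<exists>u\<in>VT. \<exists>v\<in>VT. u \<noteq> v")
      case False
      then obtain v where VT: "VT = {v}" using ne by blast
      have ET: "ET = {}"
      proof (rule ccontr)
        assume "ET \<noteq> {}"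
        then obtain e where "e \<in> ET" by blast
        then obtain c d where "c \<noteq> d" "c \<in> VT" "d \<in> VT" using wf_edgeD[OF wf] by blast
        then show False using VT by blast
      qed
      have M: "M = {}" using bij_betw_imp_surj_on[OF bj] ET by simp
      have E0: "{{z, f e} | z e. e \<in> ET \<and> z \<in> e} = {}" using ET by simp
      have eq1: "VT \<union> M = {v}" using VT M by simp
      show ?thesis by (subst eq1, subst E0, subst VT, rule famB.baseB)
    next
      case True
      then obtain u v where uv: "u \<in> VT" "v \<in> VT" "u \<noteq> v" by blast
      obtain l x where l: "l \<in> VT" "x \<in> VT" "l \<noteq> x" "{l,x} \<in> ET"
        and lx: "\<forall>e\<in>ET. l \<in> e \<longrightarrow> e = {l,x}" using tree_leaf[OF T uv] by blast
      define e0 where "e0 = {l,x}"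
      define y where "y = f e0"
      have T': "is_tree (VT - {l}) (ET - {e0})" using tree_remove_leaf[OF T l lx] e0_def by simp
      have yM: "y \<in> M" using bj l(4) unfolding y_def e0_def bij_betw_def by blast
      have bj': "bij_betw f (ET - {e0}) (M - {y})"
      proof (rule bij_betw_DiffI[OF bj])
        show "bij_betw f {e0} {y}" unfolding y_def by (simp add: bij_betw_def)
        show "{e0} \<subseteq> ET" using l(4) e0_def by simp
        show "{y} \<subseteq> M" using yM by simp
      qed
      have "card VT > 0" using fin l(1) card_gt_0_iff by blast
      then have lt: "card (VT - {l}) < n" using cn fin l(1) by simp
      have dM': "(M - {y}) \<inter> (VT - {l}) = {}" using dM by blast
      have IH: "famB ((VT - {l}) \<union> (M - {y})) {{z, f e} | z e. e \<in> ET - {e0} \<and> z \<in> e} (VT - {l})"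
        using less.IH[OF lt] T' dM' bj' by blast
      have xV: "x \<in> VT - {l}" using l by blast
      have lnot: "l \<notin> (VT - {l}) \<union> (M - {y})" using dM l(1) by blast
      have ynot: "y \<notin> (VT - {l}) \<union> (M - {y})" using dM yM by blast
      have ly: "l \<noteq> y" using dM yM l(1) by blast
      have step: "famB (insert l (insert y ((VT - {l}) \<union> (M - {y}))))
         (insert {x,y} (insert {y,l} {{z, f e} | z e. e \<in> ET - {e0} \<and> z \<in> e})) (insert l (VT - {l}))"
        by (rule famB.leafB[OF IH xV lnot ynot ly])
      have eqV: "insert l (insert y ((VT - {l}) \<union> (M - {y}))) = VT \<union> M" using l(1) yM by blast
      have eqX: "insert l (VT - {l}) = VT" using l(1) by blast
      have eqE: "insert {x,y} (insert {y,l} {{z, f e} | z e. e \<in> ET - {e0} \<and> z \<in> e})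
          = {{z, f e} | z e. e \<in> ET \<and> z \<in> e}"
      proof
        show "insert {x,y} (insert {y,l} {{z, f e} | z e. e \<in> ET - {e0} \<and> z \<in> e})
          \<subseteq> {{z, f e} | z e. e \<in> ET \<and> z \<in> e}"
        proof -
          have "{x,y} \<in> {{z, f e} | z e. e \<in> ET \<and> z \<in> e}" using l(4) unfolding y_def e0_def by blast
          moreover have "{y,l} \<in> {{z, f e} | z e. e \<in> ET \<and> z \<in> e}"
          proof -
            have "{l, f e0} \<in> {{z, f e} | z e. e \<in> ET \<and> z \<in> e}" using l(4) unfolding e0_def by blast
            then show ?thesis unfolding y_def by (simp add: insert_commute)
          qed
          ultimately show ?thesis by blast
        qed
        show "{{z, f e} | z e. e \<in> ET \<and> z \<in> e} \<subseteq>
          insert {x,y} (insert {y,l} {{z, f e} | z e. e \<in> ET - {e0} \<and> z \<in> e})"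
        proof
          fix s assume "s \<in> {{z, f e} | z e. e \<in> ET \<and> z \<in> e}"
          then obtain z e where s: "s = {z, f e}" "e \<in> ET" "z \<in> e" by blast
          show "s \<in> insert {x,y} (insert {y,l} {{z, f e} | z e. e \<in> ET - {e0} \<and> z \<in> e})"
          proof (cases "e = e0")
            case True
            then have "z = l \<or> z = x" using s unfolding e0_def by blast
            then show ?thesis using s True unfolding y_def by (auto simp: insert_commute)
          next
            case False
            then show ?thesis using s by blast
          qed
        qed
      qed
      show ?thesis using step eqV eqX eqE by simp
    qed
  qed
qed

lemma tree_famB: "is_tree VT ET \<Longrightarrow> M \<inter> VT = {} \<Longrightarrow> bij_betw f ET M \<Longrightarrow>
     famB (VT \<union> M) {{z, f e} | z e. e \<in> ET \<and> z \<in> e} VT"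
  using tree_famB_aux by blast

fun XP :: "'a list \<Rightarrow> 'a set" where
  "XP (u # a # b # rest) = (if rest = [] then {} else insert b (XP (b # rest)))"
| "XP _ = {}"

lemma XP_Cons: "XP (u # xs) = XP (v # xs)"
  by (cases xs rule: XP.cases) auto

lemma pe_Nil: "path_edges [] = {}" unfolding path_edges_def by simp
lemma pe_single: "path_edges [a] = {}" unfolding path_edges_def by simp

lemma pe_Cons2: "path_edges (a # b # rest) = insert {a,b} (path_edges (b # rest))"
proof
  show "path_edges (a # b # rest) \<subseteq> insert {a,b} (path_edges (b # rest))"
  proof
    fix e assume "e \<in> path_edges (a # b # rest)"
    then obtain i where i: "e = {(a#b#rest) ! i, (a#b#rest) ! (i+1)}" "i + 1 < length (a#b#rest)"
      unfolding path_edges_def by blast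
    show "e \<in> insert {a,b} (path_edges (b # rest))"
    proof (cases i)
      case 0 then show ?thesis using i by simp
    next
      case (Suc j)
      then have "e = {(b#rest) ! j, (b#rest) ! (j+1)}" "j + 1 < length (b#rest)" using i by auto
      then show ?thesis unfolding path_edges_def by blast
    qed
  qed
  show "insert {a,b} (path_edges (b # rest)) \<subseteq> path_edges (a # b # rest)"
  proof
    fix e assume "e \<in> insert {a,b} (path_edges (b # rest))"
    then show "e \<in> path_edges (a # b # rest)"
    proof
      assume "e = {a,b}"
      then have "e = {(a#b#rest) ! 0, (a#b#rest) ! (0+1)}" "0 + 1 < length (a#b#rest)" by auto
      then show ?thesis unfolding path_edges_def by blast
    next
      assume "e \<in> path_edges (b # rest)"
      then obtain j where j: "e = {(b#rest) ! j, (b#rest) ! (j+1)}" "j + 1 < length (b#rest)"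
        unfolding path_edges_def by blast
      then have "e = {(a#b#rest) ! Suc j, (a#b#rest) ! (Suc j+1)}" "Suc j + 1 < length (a#b#rest)" by auto
      then show ?thesis unfolding path_edges_def by blast
    qed
  qed
qed

lemma pe_sub: "e \<in> path_edges P \<Longrightarrow> e \<subseteq> set P"
  unfolding path_edges_def by auto

lemma pe_rev: "path_edges (rev P) = path_edges P"
proof -
  have sub: "path_edges (rev Q) \<subseteq> path_edges Q" for Q :: "'a list"
  proof
    fix e assume "e \<in> path_edges (rev Q)"
    then obtain i where i: "e = {rev Q ! i, rev Q ! (i+1)}" "i + 1 < length Q"
      unfolding path_edges_def by auto
    define j where "j = length Q - Suc (Suc i)"
    have "rev Q ! i = Q ! (j + 1)" "rev Q ! (i+1) = Q ! j" using i unfolding j_def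
      by (auto simp: rev_nth Suc_diff_Suc)
    then have "e = {Q ! j, Q ! (j+1)}" "j + 1 < length Q" using i unfolding j_def by auto
    then show "e \<in> path_edges Q" unfolding path_edges_def by blast
  qed
  show ?thesis using sub[of P] sub[of "rev P"] by auto
qed

lemma internal_rev: "internal (rev P) = internal P"
proof -
  have "tl (rev P) = rev (butlast P)" using butlast_rev[of "rev P"] by simp
  then have "butlast (tl (rev P)) = rev (tl (butlast P))" by simp
  then show ?thesis unfolding internal_def by (simp add: butlast_tl)
qed

lemma internal_Cons: "internal (u # xs) = set (butlast xs)"
  unfolding internal_def by simp

lemma set_path: assumes "length Q \<ge> 2" shows "set Q = insert (hd Q) (insert (last Q) (internal Q))"
proof (cases Q)
  case Nil then show ?thesis using assms by simp
next
  case (Cons u xs)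
  have "xs \<noteq> []" using Cons assms by auto
  then have "set xs = insert (last xs) (set (butlast xs))"
    by (metis append_butlast_last_id insert_commute list.simps(15) rotate1.simps(2) set_rotate1)
  then show ?thesis using Cons \<open>xs \<noteq> []\<close> by (simp add: internal_Cons)
qed

lemma XP_internal: "XP P \<subseteq> internal P"
proof (induction P rule: XP.induct)
  case (1 u a b rest)
  show ?case
  proof (cases "rest = []")
    case True then show ?thesis by simp
  next
    case False
    have "internal (b # rest) \<subseteq> internal (u # a # b # rest)"
      using False by (auto simp: internal_Cons butlast.simps(2))
    moreover have "b \<in> internal (u # a # b # rest)" using False by (simp add: internal_Cons)
    ultimately show ?thesis using 1 False by auto
  qed
qed auto

lemma card_two_iff: "u \<noteq> v \<Longrightarrow> card ({u,v} \<inter> Y) = 1 \<longleftrightarrow> (u \<in> Y \<longleftrightarrow> v \<notin> Y)"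
  by (cases "u \<in> Y"; cases "v \<in> Y") (auto simp: Int_insert_left)

lemma parity:
  "even (length P) \<Longrightarrow> length P \<ge> 2 \<Longrightarrow> (\<forall>e\<in>path_edges P. card (e \<inter> Y) = 1) \<Longrightarrow> distinct P \<Longrightarrow> hd P \<in> Y
   \<Longrightarrow> set P \<inter> Y = insert (hd P) (XP P)"
proof (induction P rule: XP.induct)
  case (1 u a b rest)
  have ua: "u \<noteq> a" "a \<noteq> b" using "1.prems"(4) by auto
  have e1: "card ({u,a} \<inter> Y) = 1" "card ({a,b} \<inter> Y) = 1" using "1.prems"(3) by (auto simp: pe_Cons2)
  have aY: "a \<notin> Y" using e1(1) ua(1) "1.prems"(5) card_two_iff by fastforce
  have bY: "b \<in> Y" using e1(2) ua(2) aY card_two_iff by fastforce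
  have rne: "rest \<noteq> []" using "1.prems"(1) by auto
  have h1: "even (length (b # rest))" using "1.prems"(1) by simp
  have h2: "2 \<le> length (b # rest)" using rne by (cases rest) auto
  have h3: "\<forall>e\<in>path_edges (b # rest). card (e \<inter> Y) = 1" using "1.prems"(3) by (auto simp: pe_Cons2)
  have h4: "distinct (b # rest)" using "1.prems"(4) by simp
  have h5: "hd (b # rest) \<in> Y" using bY by simp
  have IH: "set (b # rest) \<inter> Y = insert b (XP (b # rest))"
    using "1.IH" rne h1 h2 h3 h4 h5 by simp
  have "set (u # a # b # rest) \<inter> Y = insert u (set (b # rest) \<inter> Y)" using aY "1.prems"(5) by auto
  then show ?case using IH rne by simp
next
  case ("2_1")
  then show ?case by simp
next
  case ("2_2" v)
  then show ?case by simp
next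
  case ("2_3" u a)
  have "u \<noteq> a" using "2_3.prems"(4) by simp
  moreover have "card ({u,a} \<inter> Y) = 1" using "2_3.prems"(3) by (simp add: pe_Cons2)
  ultimately have "a \<notin> Y" using card_two_iff "2_3.prems"(5) by fastforce
  then show ?case using "2_3.prems"(5) by auto
qed

lemma famB_Esub: "famB V E X \<Longrightarrow> \<forall>e\<in>E. e \<subseteq> V"
  using famB_inv edgeok_sub by metis

lemma famB_eq: "famB V E X \<Longrightarrow> V = V' \<Longrightarrow> E = E' \<Longrightarrow> X = X' \<Longrightarrow> famB V' E' X'"
  by simp

lemma path_step:
  assumes fb: "famB V E X" and pq: "{p,q} \<in> E" and pX: "p \<in> X"
  shows "length P \<ge> 4 \<Longrightarrow> even (length P) \<Longrightarrow> distinct P \<Longrightarrow> hd P = p \<Longrightarrow> last P = q \<Longrightarrow> internal P \<inter> V = {} \<Longrightarrow>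
     famB (V \<union> set P) ((if d then E - {{p,q}} else E) \<union> path_edges P) (X \<union> XP P)"
proof (induction "length P" arbitrary: P rule: less_induct)
  case less
  have Esub: "\<forall>e\<in>E. e \<subseteq> V" using famB_Esub[OF fb] .
  have pV: "p \<in> V" "q \<in> V" using Esub pq by auto
  let ?E0 = "if d then E - {{p,q}} else E"
  have E0sub: "?E0 \<subseteq> E" by auto
  obtain a b c R' where P: "P = p # a # b # c # R'"
  proof -
    obtain u xs where "P = u # xs" using less.prems(1) by (cases P) auto
    moreover obtain a ys where "xs = a # ys" using less.prems(1) \<open>P = u # xs\<close> by (cases xs) auto
    moreover obtain b zs where "ys = b # zs" using less.prems(1) \<open>P = u # xs\<close> \<open>xs = a # ys\<close> by (cases ys) auto
    moreover obtain c R' where "zs = c # R'" using less.prems(1) \<open>P = u # xs\<close> \<open>xs = a # ys\<close> \<open>ys = b # zs\<close> by (cases zs) auto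
    ultimately show ?thesis using that less.prems(4) by simp
  qed
  have dP: "distinct (p # a # b # c # R')" using less.prems(3) P by simp
  show ?case
  proof (cases "R' = []")
    case True
    have cq: "c = q" using less.prems(5) P True by simp
    have int: "internal P = {a,b}" using P True by (simp add: internal_Cons)
    have aV: "a \<notin> V" "b \<notin> V" using int less.prems(6) by auto
    have ab: "a \<noteq> b" using dP by simp
    have st: "famB (insert a (insert b V)) (insert {p,a} (insert {a,b} (insert {b,q} ?E0))) (insert b X)"
      by (rule famB.unitB[OF fb pq pX aV ab])
    show ?thesis
    proof (rule famB_eq[OF st])
      show "insert a (insert b V) = V \<union> set P" using P True cq pV by auto
      show "insert {p,a} (insert {a,b} (insert {b,q} ?E0)) = ?E0 \<union> path_edges P"
        using P True cq by (auto simp: pe_Cons2 pe_single)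
      show "insert b X = X \<union> XP P" using P True cq by simp
    qed
  next
    case False
    define P0 where "P0 = p # c # R'"
    have lt: "length P0 < length P" using P P0_def by simp
    have ev: "even (length R')" using less.prems(2) P by simp
    have l4: "length P0 \<ge> 4"
    proof -
      have "length R' \<noteq> 0" using False by simp
      then have "length R' \<ge> 2" using ev by presburger
      then show ?thesis unfolding P0_def by simp
    qed
    have ev0: "even (length P0)" using ev P0_def by simp
    have d0: "distinct P0" using dP P0_def by simp
    have h0: "hd P0 = p" unfolding P0_def by simp
    have la0: "last P0 = q" using less.prems(5) P False P0_def by simp
    have intP: "internal P = set (a # b # c # butlast R')" using P False by (simp add: internal_Cons)
    have int0: "internal P0 = set (c # butlast R')" using False P0_def by (simp add: internal_Cons)
    have i0: "internal P0 \<inter> V = {}" using less.prems(6) intP int0 by auto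
    have abcV: "a \<notin> V" "b \<notin> V" "c \<notin> V" using less.prems(6) intP by auto
    have IH: "famB (V \<union> set P0) (?E0 \<union> path_edges P0) (X \<union> XP P0)"
      using less.hyps[OF lt l4 ev0 d0 h0 la0 i0] .
    have pc: "{p,c} \<in> ?E0 \<union> path_edges P0" unfolding P0_def by (simp add: pe_Cons2)
    have pX': "p \<in> X \<union> XP P0" using pX by simp
    have aN: "a \<notin> V \<union> set P0" "b \<notin> V \<union> set P0" using abcV dP P0_def by auto
    have ab: "a \<noteq> b" using dP by simp
    have st: "famB (insert a (insert b (V \<union> set P0)))
        (insert {p,a} (insert {a,b} (insert {b,c} (if True then (?E0 \<union> path_edges P0) - {{p,c}} else (?E0 \<union> path_edges P0)))))
        (insert b (X \<union> XP P0))"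
      by (rule famB.unitB[OF IH pc pX' aN ab])
    have pcn1: "{p,c} \<notin> ?E0" using Esub E0sub abcV(3) by blast
    have pcn2: "{p,c} \<notin> path_edges (c # R')"
    proof
      assume "{p,c} \<in> path_edges (c # R')"
      then have "p \<in> set (c # R')" using pe_sub by blast
      then show False using dP by simp
    qed
    have pe0: "path_edges P0 = insert {p,c} (path_edges (c # R'))" unfolding P0_def by (simp add: pe_Cons2)
    have Ediff: "(?E0 \<union> path_edges P0) - {{p,c}} = ?E0 \<union> path_edges (c # R')"
      using pcn1 pcn2 pe0 by blast
    show ?thesis
    proof (rule famB_eq[OF st])
      show "insert a (insert b (V \<union> set P0)) = V \<union> set P" using P P0_def by auto
      show "insert {p,a} (insert {a,b} (insert {b,c} (if True then (?E0 \<union> path_edges P0) - {{p,c}} else (?E0 \<union> path_edges P0))))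
        = ?E0 \<union> path_edges P"
        using Ediff P by (simp add: pe_Cons2)
      have "XP P = insert b (XP (b # c # R'))" using P by simp
      also have "XP (b # c # R') = XP P0" unfolding P0_def by (rule XP_Cons)
      finally show "insert b (X \<union> XP P0) = X \<union> XP P" by simp
    qed
  qed
qed

definition goodpath :: "'a \<Rightarrow> 'a \<Rightarrow> 'a set \<Rightarrow> 'a list \<Rightarrow> bool" where
  "goodpath p q V Q \<longleftrightarrow> length Q \<ge> 2 \<and> even (length Q) \<and> distinct Q \<and> hd Q = p \<and> last Q = q \<and> internal Q \<inter> V = {}"

lemma add_all:
  "famB V E X \<Longrightarrow> {p,q} \<in> E \<Longrightarrow> p \<in> X \<Longrightarrow> (\<forall>Q\<in>set L. goodpath p q V Q) \<Longrightarrow> distinct L \<Longrightarrow>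
   (\<forall>Q\<in>set L. \<forall>Q'\<in>set L. Q \<noteq> Q' \<longrightarrow> internal Q \<inter> internal Q' = {}) \<Longrightarrow>
   famB (V \<union> \<Union>(set ` set L)) (E \<union> \<Union>(path_edges ` set L)) (X \<union> \<Union>(XP ` set L))"
proof (induction L arbitrary: V E X)
  case Nil
  then show ?case by simp
next
  case (Cons Q L)
  have gQ: "goodpath p q V Q" using Cons.prems(4) by simp
  have Esub: "\<forall>e\<in>E. e \<subseteq> V" using famB_Esub[OF Cons.prems(1)] .
  have pqV: "p \<in> V" "q \<in> V" using Esub Cons.prems(2) by auto
  have st1: "famB (V \<union> set Q) (E \<union> path_edges Q) (X \<union> XP Q)"
  proof (cases "length Q = 2")
    case True
    then obtain u v where Q: "Q = [u,v]" by (cases Q rule: XP.cases) auto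
    then have "u = p" "v = q" using gQ unfolding goodpath_def by auto
    then have "V \<union> set Q = V" "E \<union> path_edges Q = E" "X \<union> XP Q = X"
      using Q pqV Cons.prems(2) by (auto simp: pe_Cons2 pe_single)
    then show ?thesis using Cons.prems(1) by simp
  next
    case False
    moreover obtain k where "length Q = 2 * k" using gQ unfolding goodpath_def by (auto elim!: evenE)
    moreover have "length Q \<ge> 2" using gQ unfolding goodpath_def by simp
    ultimately have "length Q \<ge> 4" by presburger
    then show ?thesis using path_step[OF Cons.prems(1-3), of Q False] gQ unfolding goodpath_def by simp
  qed
  have sQ: "set Q = insert p (insert q (internal Q))"
    using set_path[of Q] gQ unfolding goodpath_def by simp
  have pq1: "{p,q} \<in> E \<union> path_edges Q" using Cons.prems(2) by simp
  have pX1: "p \<in> X \<union> XP Q" using Cons.prems(3) by simp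
  have gL: "\<forall>Q'\<in>set L. goodpath p q (V \<union> set Q) Q'"
  proof
    fix Q' assume Q': "Q' \<in> set L"
    have g: "goodpath p q V Q'" using Cons.prems(4) Q' by simp
    have ne: "Q' \<noteq> Q" using Cons.prems(5) Q' by auto
    have "internal Q' \<inter> internal Q = {}" using Cons.prems(6) Q' ne by simp
    moreover have "p \<notin> internal Q'" "q \<notin> internal Q'" using g pqV unfolding goodpath_def by auto
    ultimately have "internal Q' \<inter> set Q = {}" using sQ by auto
    then show "goodpath p q (V \<union> set Q) Q'" using g unfolding goodpath_def by auto
  qed
  have dL: "distinct L" using Cons.prems(5) by simp
  have djL: "\<forall>Q\<in>set L. \<forall>Q'\<in>set L. Q \<noteq> Q' \<longrightarrow> internal Q \<inter> internal Q' = {}" using Cons.prems(6) by simp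
  have st2: "famB ((V \<union> set Q) \<union> \<Union>(set ` set L)) ((E \<union> path_edges Q) \<union> \<Union>(path_edges ` set L))
      ((X \<union> XP Q) \<union> \<Union>(XP ` set L))"
    using Cons.IH[OF st1 pq1 pX1 gL dL djL] .
  show ?case by (rule famB_eq[OF st2]) auto
qed

lemma pq_notin:
  assumes "distinct Q" "length Q \<ge> 3" "hd Q = p" "last Q = q"
  shows "{p,q} \<notin> path_edges Q"
proof
  assume "{p,q} \<in> path_edges Q"
  then obtain i where i: "{p,q} = {Q ! i, Q ! (i+1)}" "i + 1 < length Q" unfolding path_edges_def by blast
  have ne: "Q \<noteq> []" using assms by auto
  have p0: "p = Q ! 0" using assms(3) ne by (simp add: hd_conv_nth)
  have ql: "q = Q ! (length Q - 1)" using assms(4) ne by (simp add: last_conv_nth)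
  have "Q ! 0 = Q ! i \<or> Q ! 0 = Q ! (i+1)" using i(1) p0 by (auto simp: doubleton_eq_iff)
  moreover have "Q ! 0 = Q ! i \<Longrightarrow> i = 0" using nth_eq_iff_index_eq[OF assms(1), of 0 i] i(2) ne by simp
  moreover have "Q ! 0 \<noteq> Q ! (i+1)" using nth_eq_iff_index_eq[OF assms(1), of 0 "i+1"] i(2) ne by simp
  ultimately have "i = 0" by blast
  then have "Q ! (length Q - 1) = Q ! 0 \<or> Q ! (length Q - 1) = Q ! 1" using i(1) ql p0 by (auto simp: doubleton_eq_iff)
  moreover have "Q ! (length Q - 1) = Q ! 0 \<Longrightarrow> length Q - 1 = 0"
    using nth_eq_iff_index_eq[OF assms(1), of "length Q - 1" 0] assms(2) ne by simp
  moreover have "Q ! (length Q - 1) = Q ! 1 \<Longrightarrow> length Q - 1 = 1"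
    using nth_eq_iff_index_eq[OF assms(1), of "length Q - 1" 1] assms(2) ne by simp
  ultimately have "length Q - 1 = 0 \<or> length Q - 1 = 1" by blast
  then show False using assms(2) by simp
qed

lemma replace_oriented:
  assumes fb: "famB V E X" and pq: "{p,q} \<in> E" and pX: "p \<in> X"
    and gQ: "\<forall>Q\<in>set Qs. goodpath p q V Q" and dQ: "distinct Qs" and ne: "Qs \<noteq> []"
    and dj: "\<forall>Q\<in>set Qs. \<forall>Q'\<in>set Qs. Q \<noteq> Q' \<longrightarrow> internal Q \<inter> internal Q' = {}"
    and XX: "X \<subseteq> X'" and X'V: "X' \<subseteq> V \<union> \<Union>(set ` set Qs)"
    and crd: "\<forall>e \<in> (E - {{p,q}}) \<union> \<Union>(path_edges ` set Qs). card (e \<inter> X') = 1"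
  shows "famB (V \<union> \<Union>(set ` set Qs)) ((E - {{p,q}}) \<union> \<Union>(path_edges ` set Qs)) X'"
proof -
  have XV: "X \<subseteq> V" and eok: "edgeok V E X" and nbr: "\<forall>v\<in>V - X. \<exists>x\<in>X. {x,v} \<in> E"
    using famB_inv[OF fb] by auto
  have Esub: "\<forall>e\<in>E. e \<subseteq> V" using famB_Esub[OF fb] .
  have qY: "q \<in> V - X" using edgeok_D[OF eok pq pX] .
  have pV: "p \<in> V" using pX XV by blast
  let ?E = "(E - {{p,q}}) \<union> \<Union>(path_edges ` set Qs)"
  have par: "set Q \<inter> X' = insert p (XP Q)" if Q: "Q \<in> set Qs" for Q
  proof -
    have g: "goodpath p q V Q" using gQ Q by blast
    have "\<forall>e\<in>path_edges Q. card (e \<inter> X') = 1" using crd Q by blast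
    moreover have "hd Q \<in> X'" using g XX pX unfolding goodpath_def by auto
    ultimately have "set Q \<inter> X' = insert (hd Q) (XP Q)" using parity[of Q X'] g unfolding goodpath_def by blast
    then show ?thesis using g unfolding goodpath_def by simp
  qed
  have Xeq: "X' = X \<union> \<Union>(XP ` set Qs)"
  proof
    show "X \<union> \<Union>(XP ` set Qs) \<subseteq> X'"
    proof -
      have "XP Q \<subseteq> X'" if "Q \<in> set Qs" for Q using par[OF that] by blast
      then show ?thesis using XX by blast
    qed
    show "X' \<subseteq> X \<union> \<Union>(XP ` set Qs)"
    proof
      fix z assume zX: "z \<in> X'"
      show "z \<in> X \<union> \<Union>(XP ` set Qs)"
      proof (cases "z \<in> V")
        case True
        have "z \<in> X"
        proof (rule ccontr)
          assume nz: "z \<notin> X"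
          then obtain w where w: "w \<in> X" "{w,z} \<in> E" using nbr True by blast
          show False
          proof (cases "{w,z} = {p,q}")
            case True
            have "z \<noteq> p" using nz pX by blast
            then have zq: "z = q" using True by (auto simp: doubleton_eq_iff)
            define Q0 where "Q0 = hd Qs"
            have Q0: "Q0 \<in> set Qs" using ne unfolding Q0_def by simp
            have g0: "goodpath p q V Q0" using gQ Q0 by blast
            have "q \<in> set Q0" using g0 unfolding goodpath_def by (metis last_in_set list.size(3) not_numeral_le_zero)
            then have "q \<in> insert p (XP Q0)" using par[OF Q0] zq zX by blast
            moreover have "q \<noteq> p" using qY pX by blast
            moreover have "q \<notin> XP Q0" using XP_internal[of Q0] g0 qY unfolding goodpath_def by blast
            ultimately show False by blast
          next
            case False
            then have "{w,z} \<in> ?E" using w by blast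
            then have "card ({w,z} \<inter> X') = 1" using crd by blast
            moreover have "w \<noteq> z" using w nz by blast
            moreover have "w \<in> X'" using w XX by blast
            ultimately show False using card_two_iff zX by metis
          qed
        qed
        then show ?thesis by blast
      next
        case False
        then obtain Q where Q: "Q \<in> set Qs" "z \<in> set Q" using zX X'V by blast
        then have "z \<in> insert p (XP Q)" using par[OF Q(1)] zX by blast
        then have "z \<in> XP Q" using False pV by blast
        then show ?thesis using Q by blast
      qed
    qed
  qed
  show ?thesis
  proof (cases "\<exists>Q0\<in>set Qs. length Q0 = 2")
    case True
    then obtain Q0 where Q0: "Q0 \<in> set Qs" "length Q0 = 2" by blast
    have g0: "goodpath p q V Q0" using gQ Q0 by blast
    obtain u v where uv: "Q0 = [u,v]" using Q0(2) by (cases Q0 rule: XP.cases) auto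
    then have "u = p" "v = q" using g0 unfolding goodpath_def by auto
    then have "{p,q} \<in> path_edges Q0" using uv by (simp add: pe_Cons2)
    then have Eeq: "E \<union> \<Union>(path_edges ` set Qs) = ?E" using Q0 by blast
    have st: "famB (V \<union> \<Union>(set ` set Qs)) (E \<union> \<Union>(path_edges ` set Qs)) (X \<union> \<Union>(XP ` set Qs))"
      by (rule add_all[OF fb pq pX gQ dQ dj])
    show ?thesis using st Eeq Xeq by simp
  next
    case False
    obtain Q1 L where QL: "Qs = Q1 # L" using ne by (cases Qs) auto
    have gL: "\<forall>Q\<in>set L. goodpath p q V Q" using gQ QL by simp
    have dL: "distinct L" using dQ QL by simp
    have djL: "\<forall>Q\<in>set L. \<forall>Q'\<in>set L. Q \<noteq> Q' \<longrightarrow> internal Q \<inter> internal Q' = {}" using dj QL by simp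
    have st1: "famB (V \<union> \<Union>(set ` set L)) (E \<union> \<Union>(path_edges ` set L)) (X \<union> \<Union>(XP ` set L))"
      by (rule add_all[OF fb pq pX gL dL djL])
    have g1: "goodpath p q V Q1" using gQ QL by simp
    have l4: "length Q1 \<ge> 4"
    proof -
      have "length Q1 \<noteq> 2" using False QL by simp
      moreover obtain k where "length Q1 = 2 * k" using g1 unfolding goodpath_def by (auto elim!: evenE)
      moreover have "length Q1 \<ge> 2" using g1 unfolding goodpath_def by simp
      ultimately show ?thesis by presburger
    qed
    have pq1: "{p,q} \<in> E \<union> \<Union>(path_edges ` set L)" using pq by blast
    have pX1: "p \<in> X \<union> \<Union>(XP ` set L)" using pX by blast
    have int1: "internal Q1 \<inter> (V \<union> \<Union>(set ` set L)) = {}"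
    proof -
      have "internal Q1 \<inter> set Q = {}" if Q: "Q \<in> set L" for Q
      proof -
        have g: "goodpath p q V Q" using gL Q by blast
        have sQ: "set Q = insert p (insert q (internal Q))" using set_path[of Q] g unfolding goodpath_def by simp
        have "Q \<noteq> Q1" using dQ QL Q by auto
        then have "internal Q1 \<inter> internal Q = {}" using dj QL Q by simp
        moreover have "p \<notin> internal Q1" "q \<notin> internal Q1" using g1 pV qY unfolding goodpath_def by auto
        ultimately show ?thesis using sQ by auto
      qed
      moreover have "internal Q1 \<inter> V = {}" using g1 unfolding goodpath_def by simp
      ultimately show ?thesis by blast
    qed
    have st2: "famB ((V \<union> \<Union>(set ` set L)) \<union> set Q1)
        ((if True then (E \<union> \<Union>(path_edges ` set L)) - {{p,q}} else (E \<union> \<Union>(path_edges ` set L))) \<union> path_edges Q1)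
        ((X \<union> \<Union>(XP ` set L)) \<union> XP Q1)"
      using path_step[OF st1 pq1 pX1, of Q1 True] l4 g1 int1 unfolding goodpath_def by blast
    have nL: "{p,q} \<notin> path_edges Q" if Q: "Q \<in> set L" for Q
    proof -
      have g: "goodpath p q V Q" using gL Q by blast
      have "length Q \<noteq> 2" using False QL Q by auto
      then have "length Q \<ge> 3" using g unfolding goodpath_def by simp
      then show ?thesis using pq_notin[of Q p q] g unfolding goodpath_def by blast
    qed
    have Eeq: "((E \<union> \<Union>(path_edges ` set L)) - {{p,q}}) \<union> path_edges Q1 = ?E"
      using nL QL by auto
    have Veq: "(V \<union> \<Union>(set ` set L)) \<union> set Q1 = V \<union> \<Union>(set ` set Qs)" using QL by auto
    have Xeq2: "(X \<union> \<Union>(XP ` set L)) \<union> XP Q1 = X'" using QL Xeq by auto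
    show ?thesis using st2 Eeq Veq Xeq2 by simp
  qed
qed

lemma idx_dj: "\<forall>i < length Ps. \<forall>j < length Ps. i \<noteq> j \<longrightarrow> internal (Ps ! i) \<inter> internal (Ps ! j) = {} \<Longrightarrow>
  \<forall>Q\<in>set Ps. \<forall>Q'\<in>set Ps. Q \<noteq> Q' \<longrightarrow> internal Q \<inter> internal Q' = {}"
  by (metis in_set_conv_nth)

lemma famA_famB: "famA V E X \<Longrightarrow> famB V E X"
proof (induction rule: famA.induct)
  case (subdiv VT ET M f)
  then show ?case using tree_famB by blast
next
  case (odd_replace V E X x y Ps V' E' X')
  have XV: "X \<subseteq> V" and eok: "edgeok V E X" using famB_inv[OF odd_replace.IH] by auto
  have djs: "\<forall>Q\<in>set Ps. \<forall>Q'\<in>set Ps. Q \<noteq> Q' \<longrightarrow> internal Q \<inter> internal Q' = {}"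
    using idx_dj[OF odd_replace.hyps(6)] .
  have ne: "Ps \<noteq> []" using odd_replace.hyps(3) by auto
  have V'eq: "V' = V \<union> \<Union>(set ` set Ps)" using odd_replace.hyps(7) by simp
  have E'eq: "E' = (E - {{x,y}}) \<union> \<Union>(path_edges ` set Ps)" using odd_replace.hyps(8) by simp
  consider "x \<in> X" "y \<in> V - X" | "y \<in> X" "x \<in> V - X"
    using edgeok_cases[OF eok odd_replace.hyps(2) XV] by blast
  then show ?case
  proof cases
    case 1
    have gQ: "\<forall>Q\<in>set Ps. goodpath x y V Q" using odd_replace.hyps(5) unfolding goodpath_def by blast
    have st: "famB (V \<union> \<Union>(set ` set Ps)) ((E - {{x,y}}) \<union> \<Union>(path_edges ` set Ps)) X'"
    proof (rule replace_oriented[OF odd_replace.IH odd_replace.hyps(2) 1(1) gQ odd_replace.hyps(4) ne djs odd_replace.hyps(9)])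
      show "X' \<subseteq> V \<union> \<Union>(set ` set Ps)" using odd_replace.hyps(10) V'eq by simp
      show "\<forall>e\<in>(E - {{x,y}}) \<union> \<Union>(path_edges ` set Ps). card (e \<inter> X') = 1" using odd_replace.hyps(11) E'eq by simp
    qed
    then show ?thesis using V'eq E'eq by simp
  next
    case 2
    let ?Qs = "map rev Ps"
    have yx: "{y,x} \<in> E" using odd_replace.hyps(2) by (simp add: insert_commute)
    have gQ: "\<forall>Q\<in>set ?Qs. goodpath y x V Q"
    proof
      fix Q assume "Q \<in> set ?Qs"
      then obtain P where P: "P \<in> set Ps" "Q = rev P" by auto
      have "length P \<ge> 2 \<and> even (length P) \<and> distinct P \<and> hd P = x \<and> last P = y \<and> internal P \<inter> V = {}"
        using odd_replace.hyps(5) P(1) by blast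
      moreover have "P \<noteq> []" using calculation by auto
      ultimately show "goodpath y x V Q" unfolding goodpath_def using P(2)
        by (simp add: internal_rev hd_rev last_rev)
    qed
    have dQ: "distinct ?Qs" using odd_replace.hyps(4) by (simp add: distinct_map inj_on_def)
    have neQ: "?Qs \<noteq> []" using ne by simp
    have djQ: "\<forall>Q\<in>set ?Qs. \<forall>Q'\<in>set ?Qs. Q \<noteq> Q' \<longrightarrow> internal Q \<inter> internal Q' = {}"
      using djs by (auto simp: internal_rev)
    have seteq: "\<Union>(set ` set ?Qs) = \<Union>(set ` set Ps)" by simp
    have peeq: "\<Union>(path_edges ` set ?Qs) = \<Union>(path_edges ` set Ps)" by (simp add: pe_rev image_image)
    have Eyx: "E - {{y,x}} = E - {{x,y}}" by (simp add: insert_commute)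
    have st: "famB (V \<union> \<Union>(set ` set ?Qs)) ((E - {{y,x}}) \<union> \<Union>(path_edges ` set ?Qs)) X'"
    proof (rule replace_oriented[OF odd_replace.IH yx 2(1) gQ dQ neQ djQ odd_replace.hyps(9)])
      show "X' \<subseteq> V \<union> \<Union>(set ` set ?Qs)" using odd_replace.hyps(10) V'eq seteq by simp
      show "\<forall>e\<in>(E - {{y,x}}) \<union> \<Union>(path_edges ` set ?Qs). card (e \<inter> X') = 1"
        using odd_replace.hyps(11) E'eq peeq Eyx by simp
    qed
    then show ?thesis using V'eq E'eq seteq peeq Eyx by simp
  qed
qed

theorem proposition6p9:
  fixes V :: "'a set" and E :: "'a set set" and X :: "'a set"
  assumes "famA V E X"
  shows "mb_atomic (nbhd_hypergraph V E (V - X))"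
  using famB_main[OF famA_famB[OF assms]] .

end
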